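(* Let $G$ be a group, $V_1,V_2$ finite-dimensional Yetter–Drinfeld modules over $\Bbbk G$ and $V=V_1\oplus V_2$ with braiding $c$. Assume $c^2|_{V_2\otimes V_1}=\mathrm{id}_{V_2\otimes V_1}$ and $\dim V_g\le1$ for all $g\in G$. Let $W_1\subseteq V_1$, $W_2\subseteq V_2$ be $\Bbbk G$-subcomodules and $W=W_1\oplus W_2$. Then the following are equivalent: (1) $\langle W\rangle$ is the only $\mathbb N_0$-graded left coideal subalgebra $K$ of $\mathcal B(V)$ with $K(1)=W$; (2) $\langle W_1\rangle$ is the only $\mathbb N_0$-graded left coideal subalgebra $K_1$ of $\mathcal B(V_1)$ with $K_1(1)=W_1$, and $\langle W_2\rangle$ is the only $\mathbb N_0$-graded left coideal subalgebra $K_2$ of $\mathcal B(V_2)$ with $K_2(1)=W_2$.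
   Context: $\Bbbk$ algebraically closed of characteristic $0$. Yetter–Drinfeld modules over $\Bbbk G$: $G$-graded spaces with $G$-action, $g\cdot V_h\subseteq V_{ghg^{-1}}$, braiding $c(v\otimes w)=g\cdot w\otimes v$ for $v\in V_g$. $\mathcal B(V)$ is the Nichols algebra; $\mathcal B(V_i)$ is identified with the subalgebra of $\mathcal B(V)$ generated by $V_i$. An $\mathbb N_0$-graded left coideal subalgebra is an $\mathbb N_0$-graded subalgebra $K$ containing $1$ with $\Delta(K)\subseteq\mathcal B\otimes K$. $\langle S\rangle$ is the subalgebra generated by $S$. *)

theory Defs
  imports Main "HOL-Computational_Algebra.Polynomial"
begin

text \<open>The group G is a type 'g of class group_add (written additively,
not necessarily commutative); conjugation g h g^-1 is written g + h - g.
A Yetter-Drinfeld module V over kG with dim V_g <= 1 for all g is given by its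
(finite, conjugation-closed) support S and a basis x_s (s in S) with
  g . x_s = act g s * x_(g + s - g).
Elements of T^n(V) are functions on words (lists over G) supported on words of
length n over S.  The braiding on V (x) V is c(x_s (x) x_t) = act s t * x_(s+t-s) (x) x_s.
The Nichols algebra B(V) is realised as the image of the quantum symmetrizers
Omega_n inside T(V) (= quantum shuffle algebra), where the product is induced
from T(V) via Omega and the coproduct is deconcatenation.\<close>

type_synonym ('g,'k) tvec = "'g list \<Rightarrow> 'k"

definition ebasis :: "'g list \<Rightarrow> ('g,'k::field) tvec" where
  "ebasis w = (\<lambda>u. if u = w then 1 else 0)"

text \<open>Braiding c acting on tensor positions i, i+1 (0-indexed).\<close>
definition braid :: "('g::group_add \<Rightarrow> 'g \<Rightarrow> 'k::field) \<Rightarrow> nat \<Rightarrow> ('g,'k) tvec \<Rightarrow> ('g,'k) tvec" where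
  "braid act i f = (\<lambda>w. if Suc i < length w then
       (let a = w ! i; b = w ! Suc i; s = b; t = - b + a + b
        in act s t * f (w[i := s, Suc i := t]))
     else f w)"

function chain :: "('g::group_add \<Rightarrow> 'g \<Rightarrow> 'k::field) \<Rightarrow> nat \<Rightarrow> nat \<Rightarrow> ('g,'k) tvec \<Rightarrow> ('g,'k) tvec" where
  "chain act k m f = (if k < m then chain act (Suc k) m (braid act k f) else f)"
  by pat_completeness auto
termination by (relation "measure (\<lambda>(_,k,m,_). m - k)") auto

declare chain.simps[simp del]

text \<open>Quantum symmetrizer Omega_n = sum over S_n of T_sigma, via
  Omega_(n+1) = (Omega_n (x) id) o (sum_(k=0..n) c_(n-1) ... c_k).\<close>
fun omega :: "('g::group_add \<Rightarrow> 'g \<Rightarrow> 'k::field) \<Rightarrow> nat \<Rightarrow> ('g,'k) tvec \<Rightarrow> ('g,'k) tvec" where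
  "omega act 0 f = f"
| "omega act (Suc n) f = omega act n (\<lambda>w. \<Sum>k\<le>n. chain act k n f w)"

definition lspan :: "('a \<Rightarrow> 'k::field) set \<Rightarrow> ('a \<Rightarrow> 'k) set" where
  "lspan X = {f. \<exists>ps. set (map snd ps) \<subseteq> X \<and>
                  f = (\<lambda>u. sum_list (map (\<lambda>(c, x). c * x u) ps))}"

definition vsubspace :: "('a \<Rightarrow> 'k::field) set \<Rightarrow> bool" where
  "vsubspace A \<longleftrightarrow> (\<lambda>_. 0) \<in> A \<and> (\<forall>x\<in>A. \<forall>y\<in>A. (\<lambda>u. x u + y u) \<in> A) \<and> (\<forall>c. \<forall>x\<in>A. (\<lambda>u. c * x u) \<in> A)"

definition Tsp :: "'g set \<Rightarrow> nat \<Rightarrow> ('g,'k::field) tvec set" where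
  "Tsp S n = {f. \<forall>w. f w \<noteq> 0 \<longrightarrow> length w = n \<and> set w \<subseteq> S}"

definition Nichols :: "('g::group_add \<Rightarrow> 'g \<Rightarrow> 'k::field) \<Rightarrow> 'g set \<Rightarrow> nat \<Rightarrow> ('g,'k) tvec set" where
  "Nichols act S n = lspan {omega act n (ebasis w) | w. length w = n \<and> set w \<subseteq> S}"

definition tens :: "('g \<Rightarrow> 'k::field) list \<Rightarrow> ('g,'k) tvec" where
  "tens vs = (\<lambda>u. if length u = length vs then (\<Prod>k<length vs. (vs ! k) (u ! k)) else 0)"

definition tconcat :: "nat \<Rightarrow> nat \<Rightarrow> ('g,'k::field) tvec \<Rightarrow> ('g,'k) tvec \<Rightarrow> ('g,'k) tvec" where
  "tconcat i j a b = (\<lambda>w. if length w = i + j then a (take i w) * b (drop i w) else 0)"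

definition deconc :: "nat \<Rightarrow> nat \<Rightarrow> ('g,'k::field) tvec \<Rightarrow> ('g list \<times> 'g list \<Rightarrow> 'k)" where
  "deconc i j f = (\<lambda>(u, v). if length u = i \<and> length v = j then f (u @ v) else 0)"

definition tspan :: "('a \<Rightarrow> 'k::field) set \<Rightarrow> ('b \<Rightarrow> 'k) set \<Rightarrow> ('a \<times> 'b \<Rightarrow> 'k) set" where
  "tspan A C = {h. \<exists>ps. set ps \<subseteq> A \<times> C \<and>
                   h = (\<lambda>(u, v). sum_list (map (\<lambda>(a, c). a u * c v) ps))}"

definition graded_lcs :: "('g::group_add \<Rightarrow> 'g \<Rightarrow> 'k::field) \<Rightarrow> 'g set \<Rightarrow> (nat \<Rightarrow> ('g,'k) tvec set) \<Rightarrow> bool" where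
  "graded_lcs act S K \<longleftrightarrow>
     (\<forall>n. vsubspace (K n) \<and> K n \<subseteq> Nichols act S n)
   \<and> ebasis [] \<in> K 0
   \<and> (\<forall>i j a b. a \<in> Tsp S i \<and> b \<in> Tsp S j \<and> omega act i a \<in> K i \<and> omega act j b \<in> K j
          \<longrightarrow> omega act (i + j) (tconcat i j a b) \<in> K (i + j))
   \<and> (\<forall>i j f. f \<in> K (i + j) \<longrightarrow> deconc i j f \<in> tspan (Nichols act S i) (K j))"

definition genW :: "('g::group_add \<Rightarrow> 'g \<Rightarrow> 'k::field) \<Rightarrow> ('g \<Rightarrow> 'k) set \<Rightarrow> nat \<Rightarrow> ('g,'k) tvec set" where
  "genW act W n = lspan {omega act n (tens vs) | vs. length vs = n \<and> set vs \<subseteq> W}"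

definition unique_lcs :: "('g::group_add \<Rightarrow> 'g \<Rightarrow> 'k::field) \<Rightarrow> 'g set \<Rightarrow> ('g \<Rightarrow> 'k) set \<Rightarrow> bool" where
  "unique_lcs act S W \<longleftrightarrow> graded_lcs act S (genW act W) \<and>
     (\<forall>K. graded_lcs act S K \<and> K 1 = (\<lambda>v. tens [v]) ` W \<longrightarrow> K = genW act W)"

definition subcomodule :: "'g set \<Rightarrow> ('g \<Rightarrow> 'k::field) set \<Rightarrow> bool" where
  "subcomodule S W \<longleftrightarrow> vsubspace W \<and> (\<forall>w\<in>W. \<forall>g. w g \<noteq> 0 \<longrightarrow> g \<in> S)
     \<and> (\<forall>w\<in>W. \<forall>g. (\<lambda>x. if x = g then w g else 0) \<in> W)"

definition YD_data :: "('g::group_add \<Rightarrow> 'g \<Rightarrow> 'k::field) \<Rightarrow> 'g set \<Rightarrow> bool" where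
  "YD_data act S \<longleftrightarrow> finite S \<and> (\<forall>g\<in>UNIV. \<forall>s\<in>S. g + s - g \<in> S)
     \<and> (\<forall>s\<in>S. act 0 s = 1)
     \<and> (\<forall>g h. \<forall>s\<in>S. act (g + h) s = act g (h + s - h) * act h s)"

end

theory Submission
  imports Defs
begin

definition linop :: "(('a \<Rightarrow> 'k::field) \<Rightarrow> ('b \<Rightarrow> 'k)) \<Rightarrow> bool" where
  "linop \<Phi> \<longleftrightarrow> (\<forall>F G. \<Phi> (\<lambda>w. F w + G w) = (\<lambda>w. \<Phi> F w + \<Phi> G w))
      \<and> (\<forall>c F. \<Phi> (\<lambda>w. c * F w) = (\<lambda>w. c * \<Phi> F w))"

lemma linop_add: "linop \<Phi> \<Longrightarrow> \<Phi> (\<lambda>w. F w + G w) = (\<lambda>w. \<Phi> F w + \<Phi> G w)"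
  unfolding linop_def by blast

lemma linop_smult: "linop \<Phi> \<Longrightarrow> \<Phi> (\<lambda>w. c * F w) = (\<lambda>w. c * \<Phi> F w)"
  unfolding linop_def by blast

lemma linop_zero: "linop (\<Phi>::('a \<Rightarrow> 'k::field) \<Rightarrow> ('b \<Rightarrow> 'k)) \<Longrightarrow> \<Phi> (\<lambda>w. 0) = (\<lambda>w. 0)"
proof -
  assume "linop \<Phi>"
  then have "\<Phi> (\<lambda>w. 0 * (0::'k)) = (\<lambda>w. 0 * \<Phi> (\<lambda>w. 0) w)" 
    using linop_smult[of \<Phi> 0 "\<lambda>w. 0"] by simp
  then show ?thesis by simp
qed

lemma linop_diff: "linop \<Phi> \<Longrightarrow> \<Phi> (\<lambda>w. F w - G w) = (\<lambda>w. \<Phi> F w - \<Phi> G w)"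
proof -
  assume L: "linop \<Phi>"
  have "(\<lambda>w. F w - G w) = (\<lambda>w. F w + (-1) * G w)" by simp
  then have "\<Phi> (\<lambda>w. F w - G w) = (\<lambda>w. \<Phi> F w + \<Phi> (\<lambda>w. (-1) * G w) w)"
    using linop_add[OF L, of F "\<lambda>w. (-1) * G w"] by metis
  also have "\<dots> = (\<lambda>w. \<Phi> F w - \<Phi> G w)" using linop_smult[OF L, of "-1" G] by simp
  finally show ?thesis .
qed

lemma linop_sum: assumes "linop \<Phi>" "finite I" shows "\<Phi> (\<lambda>w. \<Sum>i\<in>I. F i w) = (\<lambda>w. \<Sum>i\<in>I. \<Phi> (F i) w)"
  using assms(2)
proof (induction I rule: finite_induct)
  case empty
  then show ?case using linop_zero[OF assms(1)] by simp
next
  case (insert x I)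
  have "\<Phi> (\<lambda>w. \<Sum>i\<in>insert x I. F i w) = \<Phi> (\<lambda>w. F x w + (\<Sum>i\<in>I. F i w))"
    using insert by simp
  also have "\<dots> = (\<lambda>w. \<Phi> (F x) w + \<Phi> (\<lambda>w. \<Sum>i\<in>I. F i w) w)" using linop_add[OF assms(1)] by simp
  also have "\<dots> = (\<lambda>w. \<Sum>i\<in>insert x I. \<Phi> (F i) w)" using insert by simp
  finally show ?case .
qed

lemma linop_sum_list: "linop \<Phi> \<Longrightarrow> \<Phi> (\<lambda>w. sum_list (map (\<lambda>p. F p w) ps)) = (\<lambda>w. sum_list (map (\<lambda>p. \<Phi> (F p) w) ps))"
proof (induction ps)
  case Nil
  then show ?case using linop_zero by simp
next
  case (Cons a ps)
  have "\<Phi> (\<lambda>w. sum_list (map (\<lambda>p. F p w) (a # ps))) = \<Phi> (\<lambda>w. F a w + sum_list (map (\<lambda>p. F p w) ps))"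
    by simp
  also have "\<dots> = (\<lambda>w. \<Phi> (F a) w + \<Phi> (\<lambda>w. sum_list (map (\<lambda>p. F p w) ps)) w)" using linop_add[OF Cons(2)] by simp
  also have "\<dots> = (\<lambda>w. sum_list (map (\<lambda>p. \<Phi> (F p) w) (a # ps)))" using Cons by simp
  finally show ?case .
qed

lemma linop_comp: "linop \<Phi> \<Longrightarrow> linop \<Psi> \<Longrightarrow> linop (\<lambda>F. \<Phi> (\<Psi> F))"
  unfolding linop_def by simp

lemma linop_braid: "linop (braid act i)"
  unfolding linop_def braid_def by (auto simp: Let_def fun_eq_iff algebra_simps)

lemma linop_chain: "linop (chain act k m)"
proof (induction k m rule: chain.induct[where ?a0.0 = act and ?a3.0 = "\<lambda>_. 0"])
  case (1 act k m f)
  show ?case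
  proof (cases "k < m")
    case True
    then have "linop (chain act (Suc k) m)" using 1 by simp
    then have "linop (\<lambda>F. chain act (Suc k) m (braid act k F))" using linop_comp linop_braid by blast
    moreover have "chain act k m = (\<lambda>F. chain act (Suc k) m (braid act k F))"
      using True by (simp add: fun_eq_iff chain.simps[of act k m])
    ultimately show ?thesis by simp
  next
    case False
    then have "chain act k m = (\<lambda>F. F)" by (simp add: fun_eq_iff chain.simps[of act k m])
    then show ?thesis unfolding linop_def by simp
  qed
qed

definition Tn :: "('g::group_add \<Rightarrow> 'g \<Rightarrow> 'k::field) \<Rightarrow> nat \<Rightarrow> ('g,'k) tvec \<Rightarrow> ('g,'k) tvec" where
  "Tn act m F = (\<lambda>w. \<Sum>k\<le>m. chain act k m F w)"

lemma omega_Suc: "omega act (Suc n) f = omega act n (Tn act n f)"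
  unfolding Tn_def by (rule omega.simps(2))

lemma linop_Tn: "linop (Tn act m)"
  unfolding linop_def Tn_def
  by (simp add: linop_add[OF linop_chain] linop_smult[OF linop_chain] sum.distrib sum_distrib_left)

lemma linop_omega: "linop (omega act n)"
proof (induction n)
  case 0
  then show ?case unfolding linop_def by simp
next
  case (Suc n)
  have "omega act (Suc n) = (\<lambda>F. omega act n (Tn act n F))" by (rule ext) (rule omega_Suc)
  then show ?case using linop_comp[OF Suc linop_Tn] by simp
qed


declare omega.simps(2)[simp del]

definition sl :: "'g \<Rightarrow> ('g,'k) tvec \<Rightarrow> ('g,'k) tvec" where
  "sl x F = (\<lambda>u. F (u @ [x]))"

definition rw :: "'g \<Rightarrow> ('g,'k) tvec \<Rightarrow> ('g,'k) tvec" where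
  "rw y F = (\<lambda>v. F (y # v))"

definition phi :: "'g::group_add \<Rightarrow> 'g \<Rightarrow> 'g" where
  "phi x y = - x + y + x"

definition gc :: "('g::group_add \<Rightarrow> 'g \<Rightarrow> 'k::field) \<Rightarrow> 'g \<Rightarrow> 'g list \<Rightarrow> 'k" where
  "gc act x v = prod_list (map (\<lambda>y. act x (phi x y)) v)"

definition gact :: "('g::group_add \<Rightarrow> 'g \<Rightarrow> 'k::field) \<Rightarrow> 'g \<Rightarrow> ('g,'k) tvec \<Rightarrow> ('g,'k) tvec" where
  "gact act x F = (\<lambda>v. gc act x v * F (map (phi x) v))"

definition slen :: "('g,'k::zero) tvec \<Rightarrow> nat \<Rightarrow> bool" where
  "slen F n \<longleftrightarrow> (\<forall>w. F w \<noteq> 0 \<longrightarrow> length w = n)"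

lemma gc_append: "gc act x (u @ v) = gc act x u * gc act x v"
  by (simp add: gc_def)

lemma gc_Cons: "gc act x (a # v) = act x (phi x a) * gc act x v"
  by (simp add: gc_def)

lemma gc_Nil[simp]: "gc act x [] = 1"
  by (simp add: gc_def)

lemma slen_braid: "slen F n \<Longrightarrow> slen (braid act i F) n"
  unfolding slen_def braid_def by (auto simp: Let_def)

lemma slen_chain: "slen F n \<Longrightarrow> slen (chain act k m F) n"
proof (induction k m F rule: chain.induct[where ?a0.0 = act])
  case (1 act k m f)
  show ?case
  proof (cases "k < m")
    case True
    have "slen (braid act k f) n" using 1(2) slen_braid by blast
    then show ?thesis using 1(1) True by (simp add: chain.simps[of act k m])
  next
    case False
    then show ?thesis using 1 by (simp add: chain.simps[of act k m])
  qed
qed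

lemma slen_Tn: "slen F n \<Longrightarrow> slen (Tn act m F) n"
proof -
  assume a: "slen F n"
  show ?thesis unfolding slen_def Tn_def
  proof (intro allI impI)
    fix w assume "(\<Sum>k\<le>m. chain act k m F w) \<noteq> 0"
    then obtain k where "chain act k m F w \<noteq> 0" using sum.neutral by (metis (no_types, lifting))
    then show "length w = n" using slen_chain[OF a] unfolding slen_def by blast
  qed
qed

lemma slen_omega: "slen F n \<Longrightarrow> slen (omega act m F) n"
  by (induction m arbitrary: F) (auto simp: omega_Suc slen_Tn)

lemma chain_pass: "length u = k \<Longrightarrow>
  chain act k (k + length v) F (u @ v @ [x]) = gc act x v * F (u @ [x] @ map (phi x) v)"
proof (induction v arbitrary: k u F)
  case Nil
  then show ?case by (simp add: chain.simps)
next
  case (Cons v0 v')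
  have e: "chain act k (k + length (v0 # v')) F = chain act (Suc k) (Suc k + length v') (braid act k F)"
    by (simp add: chain.simps[of act k])
  have "chain act (Suc k) (Suc k + length v') (braid act k F) ((u @ [v0]) @ v' @ [x])
     = gc act x v' * braid act k F ((u @ [v0]) @ [x] @ map (phi x) v')"
    using Cons.IH[of "u @ [v0]" "Suc k"] Cons.prems by simp
  also have "braid act k F ((u @ [v0]) @ [x] @ map (phi x) v') = act x (phi x v0) * F (u @ [x] @ map (phi x) (v0 # v'))"
    using Cons.prems by (simp add: braid_def Let_def nth_append list_update_append phi_def)
  finally show ?case using e by (simp add: gc_Cons)
qed

lemma Tn_explicit: assumes "length w = m"
  shows "Tn act m F (w @ [x]) = (\<Sum>k\<le>m. gc act x (drop k w) * F (take k w @ [x] @ map (phi x) (drop k w)))"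
  unfolding Tn_def
proof (rule sum.cong[OF refl])
  fix k assume "k \<in> {..m}"
  then have "k \<le> m" by simp
  then have "chain act k (k + length (drop k w)) F (take k w @ drop k w @ [x]) = gc act x (drop k w) * F (take k w @ [x] @ map (phi x) (drop k w))"
    using assms by (intro chain_pass) simp
  moreover have "k + length (drop k w) = m" using assms \<open>k \<le> m\<close> by simp
  moreover have "take k w @ drop k w @ [x] = w @ [x]" by (metis append_assoc append_take_drop_id)
  ultimately show "chain act k m F (w @ [x]) = gc act x (drop k w) * F (take k w @ [x] @ map (phi x) (drop k w))"
    by simp
qed

lemma braid_sl: assumes "slen G (Suc m)" "Suc i < m"
  shows "sl x (braid act i G) = braid act i (sl x G)"
proof (rule ext)
  fix u
  show "sl x (braid act i G) u = braid act i (sl x G) u"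
  proof (cases "length u = m")
    case True
    then show ?thesis using assms(2) by (simp add: sl_def braid_def Let_def nth_append list_update_append)
  next
    case False
    have z: "G (u @ [x]) = 0" using False assms(1) unfolding slen_def by auto
    have "slen (braid act i G) (Suc m)" using slen_braid assms(1) by blast
    then have z2: "braid act i G (u @ [x]) = 0" using False unfolding slen_def by auto
    show ?thesis
    proof (cases "Suc i < length u")
      case True
      have "G ((u @ [x])[i := u ! Suc i, Suc i := - (u ! Suc i) + u ! i + u ! Suc i]) = 0"
        using False assms(1) unfolding slen_def by auto
      then show ?thesis using True z2 by (simp add: sl_def braid_def Let_def nth_append list_update_append)
    next
      case F2: False
      then show ?thesis using z z2 by (simp add: sl_def braid_def)
    qed
  qed
qed

lemma chain_sl: "slen G (Suc m) \<Longrightarrow> l < m \<Longrightarrow> sl x (chain act k l G) = chain act k l (sl x G)"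
proof (induction k l G rule: chain.induct[where ?a0.0 = act])
  case (1 act k l f)
  show ?case
  proof (cases "k < l")
    case True
    have "sl x (chain act (Suc k) l (braid act k f)) = chain act (Suc k) l (sl x (braid act k f))"
      using 1 True slen_braid by blast
    also have "sl x (braid act k f) = braid act k (sl x f)" using braid_sl[of f m k x act] 1(2,3) True by simp
    finally show ?thesis using True by (simp add: chain.simps[of act k l])
  next
    case False
    then show ?thesis by (simp add: chain.simps[of act k l])
  qed
qed

lemma Tn_sl: "slen G (Suc m) \<Longrightarrow> n < m \<Longrightarrow> sl x (Tn act n G) = Tn act n (sl x G)"
proof -
  assume a: "slen G (Suc m)" "n < m"
  show ?thesis
  proof (rule ext)
    fix u
    have "\<And>k. chain act k n G (u @ [x]) = chain act k n (sl x G) u"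
      using chain_sl[OF a, of x act] by (metis sl_def)
    then show "sl x (Tn act n G) u = Tn act n (sl x G) u"
      unfolding Tn_def sl_def by simp
  qed
qed

lemma omega_sl: "slen G (Suc m) \<Longrightarrow> n \<le> m \<Longrightarrow> sl x (omega act n G) = omega act n (sl x G)"
proof (induction n arbitrary: G)
  case 0
  then show ?case by simp
next
  case (Suc n)
  have "sl x (omega act (Suc n) G) = sl x (omega act n (Tn act n G))" by (simp add: omega_Suc)
  also have "\<dots> = omega act n (sl x (Tn act n G))" using Suc(1)[of "Tn act n G"] Suc(3) slen_Tn[OF Suc(2)] by simp
  also have "sl x (Tn act n G) = Tn act n (sl x G)" using Tn_sl[of G m n x act] Suc(2,3) by simp
  finally show ?case by (simp add: omega_Suc)
qed

lemma sl_omega_Suc: "slen F (Suc n) \<Longrightarrow> sl x (omega act (Suc n) F) = omega act n (sl x (Tn act n F))"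
  using omega_sl[of "Tn act n F" n n x act] slen_Tn[of F "Suc n" act n] by (simp add: omega_Suc)

lemma Tn_tconcat_sl:
  assumes "slen a (Suc i)" "slen b (Suc j)"
  shows "sl x (Tn act (Suc i + j) (tconcat (Suc i) (Suc j) a b)) =
    (\<lambda>w. tconcat (Suc i) j a (sl x (Tn act j b)) w + tconcat i (Suc j) (sl x (Tn act i a)) (gact act x b) w)"
proof (rule ext)
  fix w :: "'a list"
  let ?F = "tconcat (Suc i) (Suc j) a b"
  let ?t = "\<lambda>k. gc act x (drop k w) * ?F (take k w @ [x] @ map (phi x) (drop k w))"
  show "sl x (Tn act (Suc i + j) ?F) w = tconcat (Suc i) j a (sl x (Tn act j b)) w + tconcat i (Suc j) (sl x (Tn act i a)) (gact act x b) w"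
  proof (cases "length w = Suc i + j")
    case False
    have "slen ?F (Suc i + Suc j)" unfolding slen_def tconcat_def by auto
    then have "slen (Tn act (Suc i + j) ?F) (Suc i + Suc j)" by (rule slen_Tn)
    then have "Tn act (Suc i + j) ?F (w @ [x]) = 0" using False unfolding slen_def by auto
    then show ?thesis using False by (simp add: sl_def tconcat_def)
  next
    case True
    have L: "sl x (Tn act (Suc i + j) ?F) w = (\<Sum>k\<le>i + Suc j. ?t k)"
      unfolding sl_def using Tn_explicit[OF True] by simp
    also have "\<dots> = (\<Sum>k\<le>i. ?t k) + (\<Sum>k = Suc i..i + Suc j. ?t k)"
      by (rule sum_up_index_split)
    also have "(\<Sum>k = Suc i..i + Suc j. ?t k) = (\<Sum>k = 0..j. ?t (k + Suc i))"
    proof -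
      have e: "{Suc i..i + Suc j} = {0 + Suc i..j + Suc i}" by simp
      show ?thesis unfolding e by (rule sum.shift_bounds_cl_nat_ivl)
    qed
    finally have S: "sl x (Tn act (Suc i + j) ?F) w = (\<Sum>k\<le>i. ?t k) + (\<Sum>k\<le>j. ?t (k + Suc i))"
      by (simp add: atLeast0AtMost)
    define u' where "u' = take i w"
    define v' where "v' = drop i w"
    define u where "u = take (Suc i) w"
    define v where "v = drop (Suc i) w"
    have lu': "length u' = i" and lv': "length v' = Suc j" and lu: "length u = Suc i" and lv: "length v = j"
      using True by (auto simp: u'_def v'_def u_def v_def)
    have wA: "w = u' @ v'" by (simp add: u'_def v'_def)
    have wB: "w = u @ v" by (simp add: u_def v_def)
    have A: "?t k = (gc act x (drop k u') * a (take k u' @ [x] @ map (phi x) (drop k u'))) * (gc act x v' * b (map (phi x) v'))"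
      if "k \<le> i" for k
    proof -
      have 1: "take k w = take k u'" "drop k w = drop k u' @ v'" using that lu' by (auto simp: wA)
      define z1 where "z1 = take k u' @ [x] @ map (phi x) (drop k u')"
      have l: "length z1 = Suc i" using that lu' by (simp add: z1_def)
      have e: "take k w @ [x] @ map (phi x) (drop k w) = z1 @ map (phi x) v'" by (simp add: 1 z1_def)
      have t: "take (Suc i) (z1 @ map (phi x) v') = z1" "drop (Suc i) (z1 @ map (phi x) v') = map (phi x) v'"
        using l by (metis append_eq_conv_conj)+
      have f: "?F (z1 @ map (phi x) v') = a z1 * b (map (phi x) v')"
        unfolding tconcat_def using t l lv' by simp
      have "?t k = gc act x (drop k w) * ?F (z1 @ map (phi x) v')"
        by (simp only: e)
      also have "\<dots> = gc act x (drop k u' @ v') * (a z1 * b (map (phi x) v'))"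
        by (simp only: f 1)
      finally have "?t k = gc act x (drop k u' @ v') * (a z1 * b (map (phi x) v'))" .
      then show ?thesis by (simp add: gc_append z1_def)
    qed
    have B: "?t (k + Suc i) = a u * (gc act x (drop k v) * b (take k v @ [x] @ map (phi x) (drop k v)))"
      if "k \<le> j" for k
    proof -
      have 1: "take (k + Suc i) w = u @ take k v" "drop (k + Suc i) w = drop k v" using that lu by (auto simp: wB)
      have 3: "(u @ take k v) @ [x] @ map (phi x) (drop k v) = u @ (take k v @ [x] @ map (phi x) (drop k v))"
        by simp
      have 4: "length (take k v @ [x] @ map (phi x) (drop k v)) = Suc j" using that lv by simp
      show ?thesis unfolding 1 3 unfolding tconcat_def using lu 4 by simp
    qed
    have SA: "(\<Sum>k\<le>i. ?t k) = Tn act i a (u' @ [x]) * gact act x b v'"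
      using Tn_explicit[OF lu', of act a x] A by (simp add: sum_distrib_right gact_def)
    have SB: "(\<Sum>k\<le>j. ?t (k + Suc i)) = a u * Tn act j b (v @ [x])"
      using Tn_explicit[OF lv, of act b x] B by (simp add: sum_distrib_left)
    have R1: "tconcat (Suc i) j a (sl x (Tn act j b)) w = a u * Tn act j b (v @ [x])"
      using True by (simp add: tconcat_def sl_def u_def v_def)
    have R2: "tconcat i (Suc j) (sl x (Tn act i a)) (gact act x b) w = Tn act i a (u' @ [x]) * gact act x b v'"
      using True by (simp add: tconcat_def sl_def u'_def v'_def)
    show ?thesis using S SA SB R1 R2 by simp
  qed
qed

lemma omega_tconcat_sl:
  assumes "slen a (Suc i)" "slen b (Suc j)"
  shows "sl x (omega act (Suc i + Suc j) (tconcat (Suc i) (Suc j) a b)) =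
    (\<lambda>w. omega act (Suc i + j) (tconcat (Suc i) j a (sl x (Tn act j b))) w
        + omega act (Suc i + j) (tconcat i (Suc j) (sl x (Tn act i a)) (gact act x b)) w)"
proof -
  have s: "slen (tconcat (Suc i) (Suc j) a b) (Suc (Suc i + j))" unfolding slen_def tconcat_def by auto
  have "sl x (omega act (Suc i + Suc j) (tconcat (Suc i) (Suc j) a b))
      = omega act (Suc i + j) (sl x (Tn act (Suc i + j) (tconcat (Suc i) (Suc j) a b)))"
    using sl_omega_Suc[OF s, of x act] by simp
  also have "\<dots> = omega act (Suc i + j) (\<lambda>w. tconcat (Suc i) j a (sl x (Tn act j b)) w + tconcat i (Suc j) (sl x (Tn act i a)) (gact act x b) w)"
    using Tn_tconcat_sl[OF assms] by simp
  finally show ?thesis by (simp only: linop_add[OF linop_omega])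
qed


definition cc :: "'g::group_add set \<Rightarrow> bool" where
  "cc S \<longleftrightarrow> (\<forall>g. \<forall>s\<in>S. g + s - g \<in> S)"

definition yd :: "('g::group_add \<Rightarrow> 'g \<Rightarrow> 'k::field) \<Rightarrow> 'g set \<Rightarrow> bool" where
  "yd act S \<longleftrightarrow> (\<forall>g h. \<forall>s\<in>S. act (g + h) s = act g (h + s - h) * act h s)"

definition lets :: "'g set \<Rightarrow> ('g,'k::zero) tvec \<Rightarrow> bool" where
  "lets S F \<longleftrightarrow> (\<forall>w. F w \<noteq> 0 \<longrightarrow> set w \<subseteq> S)"

lemma grp1: "b + (- b + a + b) - b = (a::'g::group_add)"
  by (simp only: diff_conv_add_uminus add.assoc) simp
lemma grp2: "- phi g b + phi g a + phi g b = phi g (- b + a + (b::'g::group_add))"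
  by (simp only: phi_def diff_conv_add_uminus add.assoc minus_add minus_minus) simp
lemma grp3: "g + phi g t - g = (t::'g::group_add)"
  by (simp only: phi_def diff_conv_add_uminus add.assoc) simp
lemma grp4: "g + phi g b = b + (g::'g::group_add)"
  by (simp only: phi_def diff_conv_add_uminus add.assoc) simp
lemma grp5: "phi g b + phi g t - phi g b = phi g (b + t - (b::'g::group_add))"
  by (simp only: phi_def diff_conv_add_uminus add.assoc minus_add minus_minus) simp
lemma grp6: "- g + s - - g = phi g (s::'g::group_add)"
  by (simp only: phi_def diff_conv_add_uminus add.assoc minus_minus)

lemma cc_in: "cc S \<Longrightarrow> s \<in> S \<Longrightarrow> g + s - g \<in> S"
  unfolding cc_def by blast

lemma cc_phi: "cc S \<Longrightarrow> s \<in> S \<Longrightarrow> phi g s \<in> S"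
proof -
  assume "cc S" "s \<in> S"
  then have "(- g) + s - (- g) \<in> S" by (rule cc_in)
  then show ?thesis by (simp only: grp6)
qed

lemma set_subset_nth: "set w \<subseteq> S \<longleftrightarrow> (\<forall>k<length w. w ! k \<in> S)"
  by (metis in_set_conv_nth subset_code(1))

lemma lets_braid: assumes "cc S" "lets S F" shows "lets S (braid act i F)"
  unfolding lets_def
proof (intro allI impI)
  fix w assume nz: "braid act i F w \<noteq> 0"
  show "set w \<subseteq> S"
  proof (cases "Suc i < length w")
    case False
    then show ?thesis using nz assms(2) unfolding lets_def braid_def by auto
  next
    case True
    let ?a = "w ! i" and ?b = "w ! Suc i"
    let ?w' = "w[i := ?b, Suc i := - ?b + ?a + ?b]"
    have "F ?w' \<noteq> 0" using nz True unfolding braid_def by (auto simp: Let_def)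
    then have S': "set ?w' \<subseteq> S" using assms(2) unfolding lets_def by blast
    have l: "length ?w' = length w" by simp
    show ?thesis unfolding set_subset_nth
    proof (intro allI impI)
      fix k assume k: "k < length w"
      show "w ! k \<in> S"
      proof (cases "k = i")
        case True
        have "?w' ! Suc i \<in> S" using S' \<open>Suc i < length w\<close> l unfolding set_subset_nth by metis
        then have "- ?b + ?a + ?b \<in> S" using \<open>Suc i < length w\<close> by simp
        then have "?b + (- ?b + ?a + ?b) - ?b \<in> S" using assms(1) cc_in by blast
        then show ?thesis using True grp1 by metis
      next
        case False
        show ?thesis
        proof (cases "k = Suc i")
          case True
          have "?w' ! i \<in> S" using S' \<open>Suc i < length w\<close> l unfolding set_subset_nth by (metis Suc_lessD)
          then show ?thesis using True \<open>Suc i < length w\<close> by simp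
        next
          case F2: False
          have "?w' ! k \<in> S" using S' k l unfolding set_subset_nth by metis
          then show ?thesis using False F2 by simp
        qed
      qed
    qed
  qed
qed

lemma lets_chain: "cc S \<Longrightarrow> lets S F \<Longrightarrow> lets S (chain act k m F)"
proof (induction k m F rule: chain.induct[where ?a0.0 = act])
  case (1 act k m f)
  show ?case
  proof (cases "k < m")
    case True
    have "lets S (braid act k f)" using 1(2,3) lets_braid by blast
    then show ?thesis using 1(1,2) True by (simp add: chain.simps[of act k m])
  next
    case False
    then show ?thesis using 1 by (simp add: chain.simps[of act k m])
  qed
qed

lemma lets_Tn: assumes "cc S" "lets S F" shows "lets S (Tn act m F)"
  unfolding lets_def Tn_def
proof (intro allI impI)
  fix w assume "(\<Sum>k\<le>m. chain act k m F w) \<noteq> 0"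
  then obtain k where "chain act k m F w \<noteq> 0" using sum.neutral by (metis (no_types, lifting))
  then show "set w \<subseteq> S" using lets_chain[OF assms] unfolding lets_def by blast
qed

lemma lets_omega: "cc S \<Longrightarrow> lets S F \<Longrightarrow> lets S (omega act m F)"
  by (induction m arbitrary: F) (auto simp: omega_Suc lets_Tn)

lemma lets_gact: assumes "cc S" "lets S F" shows "lets S (gact act g F)"
  unfolding lets_def
proof (intro allI impI)
  fix w assume "gact act g F w \<noteq> 0"
  then have "F (map (phi g) w) \<noteq> 0" unfolding gact_def by auto
  then have "set (map (phi g) w) \<subseteq> S" using assms(2) unfolding lets_def by blast
  then have "\<forall>y\<in>set w. g + phi g y - g \<in> S" using assms(1) cc_in by fastforce
  then show "set w \<subseteq> S" using grp3 by (metis subsetI)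
qed

lemma lets_sl: "lets S F \<Longrightarrow> lets S (sl x F)"
  unfolding lets_def sl_def by fastforce

lemma lets_rw: "lets S F \<Longrightarrow> lets S (rw x F)"
  unfolding lets_def rw_def by fastforce

lemma slen_sl: "slen F (Suc n) \<Longrightarrow> slen (sl x F) n"
  unfolding slen_def sl_def by auto

lemma slen_rw: "slen F (Suc n) \<Longrightarrow> slen (rw x F) n"
  unfolding slen_def rw_def by auto

lemma slen_gact: "slen F n \<Longrightarrow> slen (gact act g F) n"
  unfolding slen_def gact_def by auto

lemma lets_tconcat: "lets S a \<Longrightarrow> lets S b \<Longrightarrow> lets S (tconcat i j a b)"
  unfolding lets_def tconcat_def
  by (metis (no_types, lifting) append_take_drop_id le_sup_iff mult_not_zero set_append)

lemma slen_tconcat: "slen (tconcat i j a b) (i + j)"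
  unfolding slen_def tconcat_def by auto

lemma split_word2: assumes "Suc i < length w"
  shows "w = take i w @ w ! i # w ! Suc i # drop (Suc (Suc i)) w"
proof -
  have "drop i w = w ! i # drop (Suc i) w" using assms by (simp add: Cons_nth_drop_Suc)
  moreover have "drop (Suc i) w = w ! Suc i # drop (Suc (Suc i)) w" using assms by (simp add: Cons_nth_drop_Suc)
  ultimately show ?thesis by (metis append_take_drop_id)
qed

lemma yd_key: assumes "yd act S" "phi g t \<in> S" "t = - b + a + b"
  shows "act b t * act g (phi g t) = act g (phi g a) * act (phi g b) (phi g t)"
proof -
  have 1: "act (b + g) (phi g t) = act b (g + phi g t - g) * act g (phi g t)"
    using assms(1,2) unfolding yd_def by blast
  have 2: "act (g + phi g b) (phi g t) = act g (phi g b + phi g t - phi g b) * act (phi g b) (phi g t)"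
    using assms(1,2) unfolding yd_def by blast
  have "phi g b + phi g t - phi g b = phi g a" using grp5[of g b t] grp1[of b a] assms(3) by simp
  then show ?thesis using 1 2 grp3[of g t] grp4[of g b] by simp
qed

lemma braid_gact: assumes "cc S" "yd act S" "lets S F"
  shows "braid act i (gact act g F) = gact act g (braid act i F)"
proof (rule ext)
  fix w
  show "braid act i (gact act g F) w = gact act g (braid act i F) w"
  proof (cases "Suc i < length w")
    case False
    then show ?thesis by (simp add: braid_def gact_def)
  next
    case True
    define p where "p = take i w"
    define a where "a = w ! i"
    define b where "b = w ! Suc i"
    define q where "q = drop (Suc (Suc i)) w"
    have w: "w = p @ a # b # q" unfolding p_def a_def b_def q_def by (rule split_word2[OF True])
    have lp: "length p = i" using True by (simp add: p_def)
    define t where "t = - b + a + b"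
    have L: "braid act i (gact act g F) w = act b t * (gc act g (p @ b # t # q) * F (map (phi g) (p @ b # t # q)))"
      unfolding w using lp by (simp add: braid_def Let_def nth_append list_update_append gact_def t_def)
    have R: "gact act g (braid act i F) w = gc act g (p @ a # b # q) * (act (phi g b) (phi g t) * F (map (phi g) (p @ b # t # q)))"
      unfolding w using lp by (simp add: braid_def Let_def nth_append list_update_append gact_def t_def grp2)
    show ?thesis
    proof (cases "F (map (phi g) (p @ b # t # q)) = 0")
      case True
      then show ?thesis using L R by simp
    next
      case False
      then have "set (map (phi g) (p @ b # t # q)) \<subseteq> S" using assms(3) unfolding lets_def by blast
      then have "phi g t \<in> S" by simp
      then have key: "act b t * act g (phi g t) = act g (phi g a) * act (phi g b) (phi g t)"
        using yd_key[OF assms(2)] t_def by blast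
      have "act b t * gc act g (p @ b # t # q) = gc act g (p @ a # b # q) * act (phi g b) (phi g t)"
      proof -
        have "act b t * gc act g (p @ b # t # q) = gc act g p * act g (phi g b) * gc act g q * (act b t * act g (phi g t))"
          by (simp add: gc_append gc_Cons mult_ac)
        also have "\<dots> = gc act g (p @ a # b # q) * act (phi g b) (phi g t)"
          unfolding key by (simp add: gc_append gc_Cons mult_ac)
        finally show ?thesis .
      qed
      then show ?thesis using L R by (simp add: mult_ac)
    qed
  qed
qed

lemma chain_gact: "cc S \<Longrightarrow> yd act S \<Longrightarrow> lets S F \<Longrightarrow> chain act k m (gact act g F) = gact act g (chain act k m F)"
proof (induction k m F rule: chain.induct[where ?a0.0 = act])
  case (1 act k m f)
  show ?case
  proof (cases "k < m")
    case True
    have "lets S (braid act k f)" using 1(2,4) lets_braid by blast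
    then have "chain act (Suc k) m (gact act g (braid act k f)) = gact act g (chain act (Suc k) m (braid act k f))"
      using 1 True by blast
    then show ?thesis using True braid_gact[OF 1(2,3,4)] by (simp add: chain.simps[of act k m])
  next
    case False
    then show ?thesis by (simp add: chain.simps[of act k m])
  qed
qed

lemma Tn_gact: assumes "cc S" "yd act S" "lets S F"
  shows "Tn act m (gact act g F) = gact act g (Tn act m F)"
  using chain_gact[OF assms] by (simp add: Tn_def gact_def fun_eq_iff sum_distrib_left)

lemma omega_gact: "cc S \<Longrightarrow> yd act S \<Longrightarrow> lets S F \<Longrightarrow> omega act m (gact act g F) = gact act g (omega act m F)"
proof (induction m arbitrary: F)
  case 0
  then show ?case by simp
next
  case (Suc m)
  have "lets S (Tn act m F)" using lets_Tn Suc by blast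
  then show ?case using Suc Tn_gact[OF Suc(2,3,4)] by (simp add: omega_Suc)
qed


lemma tconcat_0l: "slen b j \<Longrightarrow> tconcat 0 j a b = (\<lambda>w. a [] * b w)"
  unfolding tconcat_def slen_def by (auto simp: fun_eq_iff)

lemma tconcat_0r: "slen a i \<Longrightarrow> tconcat i 0 a b = (\<lambda>w. b [] * a w)"
  unfolding tconcat_def slen_def by (auto simp: fun_eq_iff)

lemma zero_by_sl: assumes "slen F (Suc n)" "\<And>x. sl x F = (\<lambda>_. 0)" shows "F = (\<lambda>_. 0)"
proof (rule ext)
  fix w
  show "F w = 0"
  proof (cases "w = []")
    case True
    then show ?thesis using assms(1) unfolding slen_def by auto
  next
    case False
    then have "w = butlast w @ [last w]" by simp
    then have "F w = sl (last w) F (butlast w)" unfolding sl_def by metis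
    then show ?thesis using assms(2) by simp
  qed
qed

lemma omega_smult: "omega act n (\<lambda>w. c * F w) = (\<lambda>w. c * omega act n F w)"
  by (rule linop_smult[OF linop_omega])

lemma omega_zero: "omega act n (\<lambda>w. 0) = (\<lambda>w. 0)"
  by (rule linop_zero[OF linop_omega])

lemma sl_zero: "sl x (\<lambda>w. 0) = (\<lambda>w. 0)" by (simp add: sl_def)

lemma gact_zero: "gact act g (\<lambda>w. 0) = (\<lambda>w. 0)" by (simp add: gact_def)

lemma dep:
  assumes "cc S" "yd act S"
  shows "\<forall>i j a b. i + j = N \<longrightarrow> slen a i \<longrightarrow> lets S a \<longrightarrow> slen b j \<longrightarrow> lets S b \<longrightarrow>
     (omega act i a = (\<lambda>_. 0) \<or> omega act j b = (\<lambda>_. 0)) \<longrightarrow> omega act N (tconcat i j a b) = (\<lambda>_. 0)"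
proof (induction N rule: less_induct)
  case (less N)
  show ?case
  proof (intro allI impI)
    fix i j a b
    assume N: "i + j = N" and sa: "slen a i" and la: "lets S a" and sb: "slen b j" and lb: "lets S b"
      and z: "omega act i a = (\<lambda>_. 0) \<or> omega act j b = (\<lambda>_. 0)"
    consider (i0) "i = 0" | (j0) "j = 0" | (ss) i' j' where "i = Suc i'" "j = Suc j'"
      by (metis not0_implies_Suc)
    then show "omega act N (tconcat i j a b) = (\<lambda>_. 0)"
    proof cases
      case i0
      have "omega act N (tconcat i j a b) = (\<lambda>w. a [] * omega act j b w)"
        using tconcat_0l[OF sb] i0 N omega_smult by simp
      moreover have "a [] = 0 \<or> omega act j b = (\<lambda>_. 0)" using z i0 by (metis omega.simps(1))
      ultimately show ?thesis by auto
    next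
      case j0
      have "omega act N (tconcat i j a b) = (\<lambda>w. b [] * omega act i a w)"
        using tconcat_0r[OF sa] j0 N omega_smult by simp
      moreover have "b [] = 0 \<or> omega act i a = (\<lambda>_. 0)" using z j0 by (metis omega.simps(1))
      ultimately show ?thesis by auto
    next
      case ss
      let ?F = "omega act N (tconcat i j a b)"
      have sF: "slen ?F (Suc (Suc i' + j'))" using slen_omega slen_tconcat N ss
        by (metis add_Suc_right)
      have M: "Suc i' + j' < N" using N ss by simp
      show ?thesis
      proof (rule zero_by_sl[OF sF])
        fix x
        let ?b1 = "sl x (Tn act j' b)" and ?a1 = "sl x (Tn act i' a)" and ?b2 = "gact act x b"
        have sa': "slen a (Suc i')" and sb': "slen b (Suc j')" using sa sb ss by auto
        have e: "sl x ?F = (\<lambda>w. omega act (Suc i' + j') (tconcat (Suc i') j' a ?b1) w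
              + omega act (Suc i' + j') (tconcat i' (Suc j') ?a1 ?b2) w)"
          using omega_tconcat_sl[OF sa' sb', of x act] N ss by simp
        have s1: "slen ?b1 j'" by (rule slen_sl[OF slen_Tn[OF sb']])
        have l1: "lets S ?b1" by (rule lets_sl[OF lets_Tn[OF assms(1) lb]])
        have s2: "slen ?a1 i'" by (rule slen_sl[OF slen_Tn[OF sa']])
        have l2: "lets S ?a1" by (rule lets_sl[OF lets_Tn[OF assms(1) la]])
        have s3: "slen ?b2 (Suc j')" by (rule slen_gact[OF sb'])
        have l3: "lets S ?b2" by (rule lets_gact[OF assms(1) lb])
        have o1: "omega act j' ?b1 = sl x (omega act (Suc j') b)" using sl_omega_Suc[OF sb'] by simp
        have o2: "omega act i' ?a1 = sl x (omega act (Suc i') a)" using sl_omega_Suc[OF sa'] by simp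
        have o3: "omega act (Suc j') ?b2 = gact act x (omega act (Suc j') b)"
          using omega_gact[OF assms lb] by simp
        have IH: "\<And>i j a b. i + j = Suc i' + j' \<Longrightarrow> slen a i \<Longrightarrow> lets S a \<Longrightarrow> slen b j \<Longrightarrow> lets S b \<Longrightarrow>
            (omega act i a = (\<lambda>_. 0) \<or> omega act j b = (\<lambda>_. 0)) \<Longrightarrow> omega act (Suc i' + j') (tconcat i j a b) = (\<lambda>_. 0)"
          using less.IH[OF M] by blast
        have T1: "omega act (Suc i' + j') (tconcat (Suc i') j' a ?b1) = (\<lambda>_. 0)"
        proof (rule IH[OF _ sa' la s1 l1])
          show "omega act (Suc i') a = (\<lambda>_. 0) \<or> omega act j' ?b1 = (\<lambda>_. 0)"
            using z ss o1 by (auto simp: sl_def)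
        qed simp
        have T2: "omega act (Suc i' + j') (tconcat i' (Suc j') ?a1 ?b2) = (\<lambda>_. 0)"
        proof (rule IH[OF _ s2 l2 s3 l3])
          show "omega act i' ?a1 = (\<lambda>_. 0) \<or> omega act (Suc j') ?b2 = (\<lambda>_. 0)"
            using z ss o2 o3 by (auto simp: sl_def gact_def)
        qed simp
        show "sl x ?F = (\<lambda>_. 0)" using e T1 T2 by simp
      qed
    qed
  qed
qed

lemma dep_zero:
  assumes "cc S" "yd act S" "slen a i" "lets S a" "slen b j" "lets S b"
    "omega act i a = (\<lambda>_. 0) \<or> omega act j b = (\<lambda>_. 0)"
  shows "omega act (i + j) (tconcat i j a b) = (\<lambda>_. 0)"
  using dep[OF assms(1,2), of "i + j"] assms(3-7) by blast


lemma Tn0: "Tn act 0 G = G"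
  by (simp add: Tn_def fun_eq_iff chain.simps)

lemma omega1: "omega act (Suc 0) G = G"
  by (simp add: omega_Suc Tn0)

lemma omega2: "omega act (Suc (Suc 0)) G = Tn act (Suc 0) G"
  by (simp add: omega_Suc Tn0)

lemma sl_rw: "sl x (rw y G) = rw y (sl x G)"
  by (simp add: sl_def rw_def)

lemma rw_add: "rw y (\<lambda>w. P w + Q w) = (\<lambda>v. rw y P v + rw y Q v)"
  by (simp add: rw_def)

lemma rw_smult: "rw y (\<lambda>w. c * P w) = (\<lambda>v. c * rw y P v)"
  by (simp add: rw_def)

lemma sl_add: "sl y (\<lambda>w. P w + Q w) = (\<lambda>v. sl y P v + sl y Q v)"
  by (simp add: sl_def)

lemma sl_smult: "sl y (\<lambda>w. c * P w) = (\<lambda>v. c * sl y P v)"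
  by (simp add: sl_def)

lemma rw_gact: "rw y (gact act g G) = (\<lambda>v. act g (phi g y) * gact act g (rw (phi g y) G) v)"
  by (simp add: rw_def gact_def gc_Cons fun_eq_iff)

lemma slen_add: "slen P n \<Longrightarrow> slen Q n \<Longrightarrow> slen (\<lambda>v. P v + Q v) n"
  for P Q :: "'a list \<Rightarrow> 'k::field"
  unfolding slen_def[of "\<lambda>v. P v + Q v"]
proof (intro allI impI)
  fix w assume "slen P n" "slen Q n" "P w + Q w \<noteq> 0"
  then show "length w = n" unfolding slen_def by (cases "P w = 0") auto
qed

lemma slen_smult: "slen P n \<Longrightarrow> slen (\<lambda>v. c * P v) n"
  for P :: "'a list \<Rightarrow> 'k::field"
  unfolding slen_def by simp

lemma lets_add: "lets S P \<Longrightarrow> lets S Q \<Longrightarrow> lets S (\<lambda>v. P v + Q v)"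
  for P Q :: "'a list \<Rightarrow> 'k::field"
proof -
  assume a: "lets S P" "lets S Q"
  show ?thesis unfolding lets_def
  proof (intro allI impI)
    fix w assume "P w + Q w \<noteq> 0"
    then show "set w \<subseteq> S" using a unfolding lets_def by (cases "P w = 0") auto
  qed
qed

lemma lets_smult: "lets S P \<Longrightarrow> lets S (\<lambda>v. c * P v)"
  for P :: "'a list \<Rightarrow> 'k::field"
  unfolding lets_def by simp

lemma eq_by_sl: assumes "slen P (Suc n)" "slen Q (Suc n)" "\<And>x. sl x P = sl x Q" shows "P = Q"
proof (rule ext)
  fix w
  show "P w = Q w"
  proof (cases "w = []")
    case True
    have "P [] = 0" "Q [] = 0" using assms(1,2) unfolding slen_def by (metis Zero_not_Suc list.size(3))+
    then show ?thesis using True by simp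
  next
    case False
    then have "w = butlast w @ [last w]" by simp
    then have "P w = sl (last w) P (butlast w)" "Q w = sl (last w) Q (butlast w)" unfolding sl_def by metis+
    then show ?thesis using assms(3) by simp
  qed
qed

lemma slen_e: "slen (ebasis w) (length w)"
  unfolding slen_def ebasis_def by auto

lemma sl_e1: "sl x (ebasis [s]) [] = (if x = s then 1 else 0)"
  by (simp add: sl_def ebasis_def)

lemma tconcat_sle: "slen b j \<Longrightarrow> tconcat 0 j (sl x (Tn act 0 (ebasis [s]))) b = (\<lambda>w. (if x = s then 1 else 0) * b w)"
  using tconcat_0l[of b j] by (auto simp: Tn0 sl_def ebasis_def fun_eq_iff)

lemma row_formula_base:
  assumes "slen b (Suc 0)" "\<forall>z. rw z (omega act (Suc 0) b) = omega act 0 (c z)"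
  shows "rw y (omega act (Suc (Suc 0)) (tconcat (Suc 0) (Suc 0) (ebasis [s]) b)) =
    (\<lambda>v. (if y = s then 1 else 0) * omega act (Suc 0) b v + act s (phi s y) * omega act (Suc 0) (tconcat (Suc 0) 0 (ebasis [s]) (c (phi s y))) v)"
proof (rule ext)
  fix v :: "'a list"
  have cz: "c z [] = b [z]" for z using assms(2) by (metis omega.simps(1) omega1 rw_def)
  let ?F = "tconcat (Suc 0) (Suc 0) (ebasis [s]) b"
  show "rw y (omega act (Suc (Suc 0)) ?F) v =
    (if y = s then 1 else 0) * omega act (Suc 0) b v + act s (phi s y) * omega act (Suc 0) (tconcat (Suc 0) 0 (ebasis [s]) (c (phi s y))) v"
  proof (cases "length v = 1")
    case True
    then obtain v0 where v: "v = [v0]" by (metis One_nat_def length_0_conv length_Suc_conv)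
    have 1: "rw y (omega act (Suc (Suc 0)) ?F) v = Tn act (Suc 0) ?F ([y] @ [v0])"
      by (simp add: omega2 rw_def v)
    have 2: "Tn act (Suc 0) ?F ([y] @ [v0]) = (\<Sum>k\<le>Suc 0. gc act v0 (drop k [y]) * ?F (take k [y] @ [v0] @ map (phi v0) (drop k [y])))"
      by (rule Tn_explicit) simp
    have 3: "(\<Sum>k\<le>Suc 0. gc act v0 (drop k [y]) * ?F (take k [y] @ [v0] @ map (phi v0) (drop k [y])))
       = gc act v0 [y] * ?F [v0, phi v0 y] + ?F [y, v0]"
      by (simp add: atMost_Suc)
    have 4: "?F [v0, phi v0 y] = (if v0 = s then 1 else 0) * b [phi v0 y]" "?F [y, v0] = (if y = s then 1 else 0) * b [v0]"
      by (simp_all add: tconcat_def ebasis_def)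
    have 5: "tconcat (Suc 0) 0 (ebasis [s]) (c (phi s y)) [v0] = (if v0 = s then 1 else 0) * b [phi s y]"
      using cz by (simp add: tconcat_def ebasis_def)
    show ?thesis unfolding 1 2 3 4 using 5 by (simp add: v omega1 gc_Cons)
  next
    case False
    have "slen (omega act (Suc (Suc 0)) ?F) (Suc 0 + Suc 0)"
      by (rule slen_omega[OF slen_tconcat])
    then have "rw y (omega act (Suc (Suc 0)) ?F) v = 0"
      using False unfolding slen_def rw_def by auto
    moreover have "b v = 0" using assms(1) False unfolding slen_def by auto
    moreover have "tconcat (Suc 0) 0 (ebasis [s]) (c (phi s y)) v = 0" using False unfolding tconcat_def by auto
    ultimately show ?thesis by (simp add: omega1)
  qed
qed

lemma row_formula:
  assumes cc: "cc S" and yd: "yd act S"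
  shows "\<forall>b c y. slen b (Suc m) \<longrightarrow> lets S b \<longrightarrow>
    (\<forall>z. slen (c z) m \<and> lets S (c z) \<and> rw z (omega act (Suc m) b) = omega act m (c z)) \<longrightarrow>
    rw y (omega act (Suc (Suc m)) (tconcat (Suc 0) (Suc m) (ebasis [s]) b)) =
    (\<lambda>v. (if y = s then 1 else 0) * omega act (Suc m) b v
        + act s (phi s y) * omega act (Suc m) (tconcat (Suc 0) m (ebasis [s]) (c (phi s y))) v)"
proof (induction m)
  case 0
  show ?case using row_formula_base by blast
next
  case (Suc m)
  show ?case
  proof (intro allI impI)
    fix b c y
    assume sb: "slen b (Suc (Suc m))" and lb: "lets S b"
      and hc: "\<forall>z. slen (c z) (Suc m) \<and> lets S (c z) \<and> rw z (omega act (Suc (Suc m)) b) = omega act (Suc m) (c z)"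
    let ?z = "phi s y"
    let ?d = "\<lambda>a b. if a = b then 1 else (0::'b)"
    let ?L = "rw y (omega act (Suc (Suc (Suc m))) (tconcat (Suc 0) (Suc (Suc m)) (ebasis [s]) b))"
    let ?R = "\<lambda>v. ?d y s * omega act (Suc (Suc m)) b v
        + act s ?z * omega act (Suc (Suc m)) (tconcat (Suc 0) (Suc m) (ebasis [s]) (c ?z)) v"
    have se: "slen (ebasis [s]) (Suc 0)" using slen_e[of "[s]"] by simp
    have "slen (omega act (Suc (Suc (Suc m))) (tconcat (Suc 0) (Suc (Suc m)) (ebasis [s]) b)) (Suc 0 + Suc (Suc m))"
      by (rule slen_omega[OF slen_tconcat])
    then have "slen (omega act (Suc (Suc (Suc m))) (tconcat (Suc 0) (Suc (Suc m)) (ebasis [s]) b)) (Suc (Suc (Suc m)))"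
      by simp
    then have sL: "slen ?L (Suc (Suc m))" by (rule slen_rw)
    have sR: "slen ?R (Suc (Suc m))"
    proof (rule slen_add)
      show "slen (\<lambda>v. ?d y s * omega act (Suc (Suc m)) b v) (Suc (Suc m))"
        by (rule slen_smult[OF slen_omega[OF sb]])
      have "slen (tconcat (Suc 0) (Suc m) (ebasis [s]) (c ?z)) (Suc (Suc m))"
        using slen_tconcat[of "Suc 0" "Suc m"] by simp
      then show "slen (\<lambda>v. act s ?z * omega act (Suc (Suc m)) (tconcat (Suc 0) (Suc m) (ebasis [s]) (c ?z)) v) (Suc (Suc m))"
        by (rule slen_smult[OF slen_omega])
    qed
    show "?L = ?R"
    proof (rule eq_by_sl[OF sL sR])
      fix x
      let ?b1 = "sl x (Tn act (Suc m) b)"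
      let ?c1 = "\<lambda>z. sl x (Tn act m (c z))"
      have sb1: "slen ?b1 (Suc m)" by (rule slen_sl[OF slen_Tn[OF sb]])
      have lb1: "lets S ?b1" by (rule lets_sl[OF lets_Tn[OF cc lb]])
      have ob1: "omega act (Suc m) ?b1 = sl x (omega act (Suc (Suc m)) b)" using sl_omega_Suc[OF sb] by simp
      have hc1: "\<forall>z. slen (?c1 z) m \<and> lets S (?c1 z) \<and> rw z (omega act (Suc m) ?b1) = omega act m (?c1 z)"
      proof
        fix z
        have sc: "slen (c z) (Suc m)" and lc: "lets S (c z)" and rc: "rw z (omega act (Suc (Suc m)) b) = omega act (Suc m) (c z)"
          using hc by auto
        have "rw z (omega act (Suc m) ?b1) = sl x (rw z (omega act (Suc (Suc m)) b))" using ob1 sl_rw by metis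
        also have "\<dots> = omega act m (?c1 z)" using rc sl_omega_Suc[OF sc] by simp
        finally show "slen (?c1 z) m \<and> lets S (?c1 z) \<and> rw z (omega act (Suc m) ?b1) = omega act m (?c1 z)"
          using slen_sl[OF slen_Tn[OF sc]] lets_sl[OF lets_Tn[OF cc lc]] by blast
      qed
      have IH: "rw y (omega act (Suc (Suc m)) (tconcat (Suc 0) (Suc m) (ebasis [s]) ?b1)) =
          (\<lambda>v. ?d y s * omega act (Suc m) ?b1 v
            + act s ?z * omega act (Suc m) (tconcat (Suc 0) m (ebasis [s]) (?c1 ?z)) v)"
        using Suc.IH[rule_format, of ?b1 ?c1 y, OF sb1 lb1] hc1 by blast
      have sgb: "slen (gact act x b) (Suc (Suc m))" by (rule slen_gact[OF sb])
      have e1: "sl x (omega act (Suc (Suc (Suc m))) (tconcat (Suc 0) (Suc (Suc m)) (ebasis [s]) b)) =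
        (\<lambda>w. omega act (Suc (Suc m)) (tconcat (Suc 0) (Suc m) (ebasis [s]) ?b1) w
           + ?d x s * omega act (Suc (Suc m)) (gact act x b) w)"
        using omega_tconcat_sl[OF se sb, of x act] by (simp add: tconcat_sle[OF sgb] omega_smult omega_zero)
      have g1: "rw y (omega act (Suc (Suc m)) (gact act x b)) = (\<lambda>v. act x (phi x y) * omega act (Suc m) (gact act x (c (phi x y))) v)"
      proof -
        have "rw y (omega act (Suc (Suc m)) (gact act x b)) = rw y (gact act x (omega act (Suc (Suc m)) b))"
          using omega_gact[OF cc yd lb] by simp
        also have "\<dots> = (\<lambda>v. act x (phi x y) * gact act x (omega act (Suc m) (c (phi x y))) v)"
          using rw_gact hc by metis
        also have "\<dots> = (\<lambda>v. act x (phi x y) * omega act (Suc m) (gact act x (c (phi x y))) v)"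
          using omega_gact[OF cc yd] hc by metis
        finally show ?thesis .
      qed
      have LHS: "sl x ?L = (\<lambda>v. ?d y s * omega act (Suc m) ?b1 v
            + act s ?z * omega act (Suc m) (tconcat (Suc 0) m (ebasis [s]) (?c1 ?z)) v
            + ?d x s * (act x (phi x y) * omega act (Suc m) (gact act x (c (phi x y))) v))"
        unfolding sl_rw e1 rw_add rw_smult IH g1 by simp
      have sc: "slen (c ?z) (Suc m)" using hc by blast
      have sgc: "slen (gact act x (c ?z)) (Suc m)" by (rule slen_gact[OF sc])
      have e2: "sl x (omega act (Suc (Suc m)) (tconcat (Suc 0) (Suc m) (ebasis [s]) (c ?z))) =
        (\<lambda>w. omega act (Suc m) (tconcat (Suc 0) m (ebasis [s]) (?c1 ?z)) w
           + ?d x s * omega act (Suc m) (gact act x (c ?z)) w)"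
        using omega_tconcat_sl[OF se sc, of x act] by (simp add: tconcat_sle[OF sgc] omega_smult omega_zero)
      have RHS: "sl x ?R = (\<lambda>v. ?d y s * omega act (Suc m) ?b1 v
            + act s ?z * (omega act (Suc m) (tconcat (Suc 0) m (ebasis [s]) (?c1 ?z)) v
            + ?d x s * omega act (Suc m) (gact act x (c ?z)) v))"
        unfolding sl_add sl_smult e2 ob1 by simp
      show "sl x ?L = sl x ?R"
        unfolding LHS RHS by (cases "x = s") (simp_all add: algebra_simps)
    qed
  qed
qed


definition NN :: "('g::group_add \<Rightarrow> 'g \<Rightarrow> 'k::field) \<Rightarrow> 'g set \<Rightarrow> nat \<Rightarrow> ('g,'k) tvec set" where
  "NN act S n = {omega act n F | F. slen F n \<and> lets S F}"

definition words :: "'g set \<Rightarrow> nat \<Rightarrow> 'g list set" where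
  "words S n = {w. length w = n \<and> set w \<subseteq> S}"

lemma finite_words: "finite S \<Longrightarrow> finite (words S n)"
  unfolding words_def using finite_lists_length_eq[of S n] by (simp add: conj_commute)

lemma vsub_zero: "vsubspace A \<Longrightarrow> (\<lambda>_. 0) \<in> A"
  unfolding vsubspace_def by blast

lemma vsub_add: "vsubspace A \<Longrightarrow> x \<in> A \<Longrightarrow> y \<in> A \<Longrightarrow> (\<lambda>u. x u + y u) \<in> A"
  unfolding vsubspace_def by blast

lemma vsub_smult: "vsubspace A \<Longrightarrow> x \<in> A \<Longrightarrow> (\<lambda>u. c * x u) \<in> A"
  unfolding vsubspace_def by blast

lemma vsub_diff: "vsubspace A \<Longrightarrow> x \<in> A \<Longrightarrow> y \<in> A \<Longrightarrow> (\<lambda>u. x u - y u) \<in> A"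
proof -
  assume a: "vsubspace A" "x \<in> A" "y \<in> A"
  from a(1,3) have "(\<lambda>u. (-1) * y u) \<in> A" by (rule vsub_smult)
  then have "(\<lambda>u. x u + (-1) * y u) \<in> A" using a vsub_add by blast
  then show ?thesis by simp
qed

lemma vsub_sum: assumes "vsubspace A" "finite I" "\<And>i. i \<in> I \<Longrightarrow> f i \<in> A"
  shows "(\<lambda>u. \<Sum>i\<in>I. f i u) \<in> A"
  using assms(2,3)
proof (induction I rule: finite_induct)
  case empty
  then show ?case using vsub_zero[OF assms(1)] by simp
next
  case (insert x F)
  then have "(\<lambda>u. f x u + (\<Sum>i\<in>F. f i u)) \<in> A" using vsub_add[OF assms(1)] by blast
  then show ?case using insert by simp
qed

lemma vsub_sum_list: assumes "vsubspace A" "\<And>p. p \<in> set ps \<Longrightarrow> f p \<in> A"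
  shows "(\<lambda>u. sum_list (map (\<lambda>p. f p u) ps)) \<in> A"
  using assms(2)
proof (induction ps)
  case Nil
  then show ?case using vsub_zero[OF assms(1)] by simp
next
  case (Cons a ps)
  then have "(\<lambda>u. f a u + sum_list (map (\<lambda>p. f p u) ps)) \<in> A" using vsub_add[OF assms(1)] by simp
  then show ?case by simp
qed

lemma NN_I: "slen F n \<Longrightarrow> lets S F \<Longrightarrow> omega act n F \<in> NN act S n"
  unfolding NN_def by blast

lemma NN_E: "f \<in> NN act S n \<Longrightarrow> (\<And>F. f = omega act n F \<Longrightarrow> slen F n \<Longrightarrow> lets S F \<Longrightarrow> P) \<Longrightarrow> P"
  unfolding NN_def by blast

lemma vsub_NN: "vsubspace (NN act S n)"
  unfolding vsubspace_def
proof (intro conjI ballI allI)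
  have "slen (\<lambda>_. 0::'b) n" "lets S (\<lambda>_. 0::'b)" by (simp_all add: slen_def lets_def)
  then have "omega act n (\<lambda>_. 0) \<in> NN act S n" by (rule NN_I)
  then show "(\<lambda>_. 0) \<in> NN act S n" by (simp add: omega_zero)
next
  fix x y assume "x \<in> NN act S n" "y \<in> NN act S n"
  then obtain F G where "x = omega act n F" "slen F n" "lets S F" "y = omega act n G" "slen G n" "lets S G"
    by (metis NN_E)
  then show "(\<lambda>u. x u + y u) \<in> NN act S n"
    using linop_add[OF linop_omega, of act n F G] NN_I[OF slen_add lets_add] by metis
next
  fix c x assume "x \<in> NN act S n"
  then obtain F where "x = omega act n F" "slen F n" "lets S F" by (metis NN_E)
  then show "(\<lambda>u. c * x u) \<in> NN act S n"
    using omega_smult[of act n c F] NN_I[OF slen_smult lets_smult] by metis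
qed

lemma NN_slen: "f \<in> NN act S n \<Longrightarrow> slen f n"
  by (erule NN_E) (simp add: slen_omega)

lemma NN_lets: "cc S \<Longrightarrow> f \<in> NN act S n \<Longrightarrow> lets S f"
  by (erule NN_E) (simp add: lets_omega)

lemma decomp_first:
  assumes "finite S" "slen G (Suc n)" "lets S G"
  shows "G = (\<lambda>w. \<Sum>s\<in>S. tconcat (Suc 0) n (ebasis [s]) (rw s G) w)"
proof (rule ext)
  fix w
  show "G w = (\<Sum>s\<in>S. tconcat (Suc 0) n (ebasis [s]) (rw s G) w)"
  proof (cases "length w = Suc n")
    case True
    then obtain s' w' where w: "w = s' # w'" by (cases w) auto
    have t: "tconcat (Suc 0) n (ebasis [s]) (rw s G) w = (if s = s' then G w else 0)" for s
      using True by (auto simp: tconcat_def ebasis_def rw_def w)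
    show ?thesis
    proof (cases "s' \<in> S")
      case True
      then show ?thesis unfolding t using assms(1) by (simp add: sum.delta)
    next
      case False
      then have g: "G w = 0" using assms(3) unfolding lets_def w by auto
      show ?thesis unfolding t g by simp
    qed
  next
    case False
    then show ?thesis using assms(2) by (auto simp: slen_def tconcat_def)
  qed
qed

lemma rows_NN:
  assumes cc: "cc S" and yd: "yd act S" and fin: "finite S"
  shows "\<forall>F y. F \<in> NN act S (Suc n) \<longrightarrow> rw y F \<in> NN act S n"
proof (induction n)
  case 0
  show ?case
  proof (intro allI impI)
    fix F y assume "F \<in> NN act S (Suc 0)"
    then obtain G where F: "F = omega act (Suc 0) G" and sG: "slen G (Suc 0)" and lG: "lets S G" by (rule NN_E)
    have "rw y F = (\<lambda>v. G [y] * ebasis [] v)"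
    proof (rule ext)
      fix v show "rw y F v = G [y] * ebasis [] v"
      proof (cases v)
        case Nil then show ?thesis by (simp add: F omega1 rw_def ebasis_def)
      next
        case (Cons a list)
        then have "G (y # v) = 0" using sG unfolding slen_def by auto
        then show ?thesis using Cons by (simp add: F omega1 rw_def ebasis_def)
      qed
    qed
    moreover have "(\<lambda>v. G [y] * ebasis [] v) \<in> NN act S 0"
    proof -
      have "slen (\<lambda>v. G [y] * ebasis [] v) 0" "lets S (\<lambda>v. G [y] * ebasis [] v)"
        by (simp_all add: slen_def lets_def ebasis_def)
      then have "omega act 0 (\<lambda>v. G [y] * ebasis [] v) \<in> NN act S 0" by (rule NN_I)
      then show ?thesis by simp
    qed
    ultimately show "rw y F \<in> NN act S 0" by simp
  qed
next
  case (Suc m)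
  show ?case
  proof (intro allI impI)
    fix F y assume "F \<in> NN act S (Suc (Suc m))"
    then obtain G where F: "F = omega act (Suc (Suc m)) G" and sG: "slen G (Suc (Suc m))" and lG: "lets S G" by (rule NN_E)
    let ?E = "\<lambda>s. tconcat (Suc 0) (Suc m) (ebasis [s]) (rw s G)"
    have "rw y F = rw y (omega act (Suc (Suc m)) (\<lambda>w. \<Sum>s\<in>S. ?E s w))"
      using decomp_first[OF fin sG lG] F by simp
    also have "\<dots> = (\<lambda>v. \<Sum>s\<in>S. rw y (omega act (Suc (Suc m)) (?E s)) v)"
      by (subst linop_sum[OF linop_omega fin]) (simp add: rw_def)
    finally have e: "rw y F = (\<lambda>v. \<Sum>s\<in>S. rw y (omega act (Suc (Suc m)) (?E s)) v)" .
    have each: "rw y (omega act (Suc (Suc m)) (?E s)) \<in> NN act S (Suc m)" if sS: "s \<in> S" for s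
    proof -
      let ?b = "rw s G"
      have sb: "slen ?b (Suc m)" by (rule slen_rw[OF sG])
      have lb: "lets S ?b" by (rule lets_rw[OF lG])
      have "\<forall>z. \<exists>c. slen c m \<and> lets S c \<and> rw z (omega act (Suc m) ?b) = omega act m c"
      proof
        fix z
        have "rw z (omega act (Suc m) ?b) \<in> NN act S m" using Suc.IH[rule_format, OF NN_I[OF sb lb]] by blast
        then show "\<exists>c. slen c m \<and> lets S c \<and> rw z (omega act (Suc m) ?b) = omega act m c"
          by (rule NN_E) blast
      qed
      then have "\<exists>c. \<forall>z. slen (c z) m \<and> lets S (c z) \<and> rw z (omega act (Suc m) ?b) = omega act m (c z)"
        by (rule choice)
      then obtain c where hc: "\<forall>z. slen (c z) m \<and> lets S (c z) \<and> rw z (omega act (Suc m) ?b) = omega act m (c z)"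
        by (elim exE)
      have R: "rw y (omega act (Suc (Suc m)) (?E s)) =
        (\<lambda>v. (if y = s then 1 else 0) * omega act (Suc m) ?b v
            + act s (phi s y) * omega act (Suc m) (tconcat (Suc 0) m (ebasis [s]) (c (phi s y))) v)"
        using row_formula[OF cc yd, where m=m and s=s, rule_format, of ?b c y, OF sb lb] hc by blast
      let ?H = "\<lambda>v. (if y = s then 1 else 0) * ?b v + act s (phi s y) * tconcat (Suc 0) m (ebasis [s]) (c (phi s y)) v"
      have eqH: "omega act (Suc m) ?H = (\<lambda>v. (if y = s then 1 else 0) * omega act (Suc m) ?b v
            + act s (phi s y) * omega act (Suc m) (tconcat (Suc 0) m (ebasis [s]) (c (phi s y))) v)"
        by (simp add: linop_add[OF linop_omega] omega_smult)
      have sH: "slen ?H (Suc m)"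
      proof -
        have "slen (tconcat (Suc 0) m (ebasis [s]) (c (phi s y))) (Suc m)" using slen_tconcat[of "Suc 0" m] by simp
        then show ?thesis by (rule slen_add[OF slen_smult[OF sb] slen_smult])
      qed
      have lH: "lets S ?H"
      proof -
        have "lets S (ebasis [s])" using sS by (auto simp: lets_def ebasis_def)
        then have "lets S (tconcat (Suc 0) m (ebasis [s]) (c (phi s y)))" using lets_tconcat hc by blast
        then show ?thesis using lets_add[OF lets_smult[OF lb] lets_smult] by blast
      qed
      have "omega act (Suc m) ?H \<in> NN act S (Suc m)" by (rule NN_I[OF sH lH])
      then show ?thesis using R eqH by simp
    qed
    show "rw y F \<in> NN act S (Suc m)" unfolding e by (rule vsub_sum[OF vsub_NN fin each])
  qed
qed

lemma rows_NN': "cc S \<Longrightarrow> yd act S \<Longrightarrow> finite S \<Longrightarrow> F \<in> NN act S (Suc n) \<Longrightarrow> rw y F \<in> NN act S n"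
  using rows_NN by blast

lemma sl_NN: assumes "cc S" "F \<in> NN act S (Suc n)" shows "sl x F \<in> NN act S n"
proof -
  obtain G where F: "F = omega act (Suc n) G" and sG: "slen G (Suc n)" and lG: "lets S G"
    using assms(2) by (rule NN_E)
  have "sl x F = omega act n (sl x (Tn act n G))" using sl_omega_Suc[OF sG] F by simp
  moreover have "slen (sl x (Tn act n G)) n" by (rule slen_sl[OF slen_Tn[OF sG]])
  moreover have "lets S (sl x (Tn act n G))" by (rule lets_sl[OF lets_Tn[OF assms(1) lG]])
  ultimately show ?thesis using NN_I by metis
qed

lemma sls_NN: "cc S \<Longrightarrow> F \<in> NN act S (i + length v) \<Longrightarrow> (\<lambda>u. F (u @ v)) \<in> NN act S i"
proof (induction v arbitrary: F rule: rev_induct)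
  case Nil
  then show ?case by simp
next
  case (snoc x v)
  have "sl x F \<in> NN act S (i + length v)" using sl_NN[OF snoc(2)] snoc(3) by simp
  then have "(\<lambda>u. sl x F (u @ v)) \<in> NN act S i" using snoc(1,2) by blast
  then show ?case by (simp add: sl_def)
qed

lemma rws_NN: "cc S \<Longrightarrow> yd act S \<Longrightarrow> finite S \<Longrightarrow> F \<in> NN act S (length u + j) \<Longrightarrow> (\<lambda>v. F (u @ v)) \<in> NN act S j"
proof (induction u arbitrary: F)
  case Nil
  then show ?case by simp
next
  case (Cons y u)
  have "rw y F \<in> NN act S (length u + j)" using rows_NN'[OF Cons(2,3,4)] Cons(5) by simp
  then have "(\<lambda>v. rw y F (u @ v)) \<in> NN act S j" using Cons by blast
  then show ?case by (simp add: rw_def)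
qed

lemma mid_NN: "cc S \<Longrightarrow> yd act S \<Longrightarrow> finite S \<Longrightarrow> F \<in> NN act S (length u + m + length z) \<Longrightarrow> (\<lambda>v. F (u @ v @ z)) \<in> NN act S m"
proof -
  assume a: "cc S" "yd act S" "finite S" "F \<in> NN act S (length u + m + length z)"
  then have "(\<lambda>v. F (v @ z)) \<in> NN act S (length u + m)" using sls_NN by blast
  then have "(\<lambda>v. (\<lambda>v. F (v @ z)) (u @ v)) \<in> NN act S m" using rws_NN[OF a(1,2,3)] by blast
  then show ?thesis by simp
qed


lemma lspan_vsub: "vsubspace (lspan X)"
  unfolding vsubspace_def
proof (intro conjI ballI allI)
  show "(\<lambda>_. 0) \<in> lspan X" unfolding lspan_def by (rule CollectI, rule exI[of _ "[]"]) simp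
next
  fix x y assume "x \<in> lspan X" "y \<in> lspan X"
  then obtain ps qs where "set (map snd ps) \<subseteq> X" "x = (\<lambda>u. sum_list (map (\<lambda>(c, x). c * x u) ps))"
    "set (map snd qs) \<subseteq> X" "y = (\<lambda>u. sum_list (map (\<lambda>(c, x). c * x u) qs))"
    unfolding lspan_def by blast
  then show "(\<lambda>u. x u + y u) \<in> lspan X" unfolding lspan_def
    by (intro CollectI exI[of _ "ps @ qs"]) auto
next
  fix a x assume "x \<in> lspan X"
  then obtain ps where ps: "set (map snd ps) \<subseteq> X" "x = (\<lambda>u. sum_list (map (\<lambda>(c, x). c * x u) ps))"
    unfolding lspan_def by blast
  have e: "a * sum_list (map (\<lambda>(c, x). c * x u) ps) = sum_list (map (\<lambda>(c, x). c * x u) (map (\<lambda>(c,x). (a * c, x)) ps))" for u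
    by (induction ps) (auto simp: algebra_simps)
  show "(\<lambda>u. a * x u) \<in> lspan X" unfolding lspan_def
    apply (intro CollectI exI[of _ "map (\<lambda>(c,x). (a * c, x)) ps"])
    using ps e by (auto simp: case_prod_beta)
qed

lemma lspan_base: "x \<in> X \<Longrightarrow> x \<in> lspan X"
  unfolding lspan_def by (intro CollectI exI[of _ "[(1, x)]"]) auto

lemma lspan_sub: assumes "vsubspace A" "X \<subseteq> A" shows "lspan X \<subseteq> A"
proof
  fix f assume "f \<in> lspan X"
  then obtain ps where ps: "set (map snd ps) \<subseteq> X" "f = (\<lambda>u. sum_list (map (\<lambda>(c, x). c * x u) ps))"
    unfolding lspan_def by blast
  have "(\<lambda>u. sum_list (map (\<lambda>p. (\<lambda>u. fst p * snd p u) u) ps)) \<in> A"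
  proof (rule vsub_sum_list[OF assms(1)])
    fix p assume "p \<in> set ps"
    then have "snd p \<in> A" using ps(1) assms(2) by auto
    then show "(\<lambda>u. fst p * snd p u) \<in> A" by (rule vsub_smult[OF assms(1)])
  qed
  then show "f \<in> A" using ps(2) by (simp add: case_prod_unfold)
qed

lemma expand_basis:
  assumes "finite S" "slen F n" "lets S F"
  shows "F = (\<lambda>u. \<Sum>w\<in>words S n. F w * ebasis w u)"
proof (rule ext)
  fix u
  show "F u = (\<Sum>w\<in>words S n. F w * ebasis w u)"
  proof (cases "u \<in> words S n")
    case True
    have "(\<Sum>w\<in>words S n. F w * ebasis w u) = (\<Sum>w\<in>words S n. if w = u then F u else 0)"
      by (rule sum.cong) (auto simp: ebasis_def)
    also have "\<dots> = F u" using True finite_words[OF assms(1)] by (simp add: sum.delta')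
    finally show ?thesis by simp
  next
    case False
    then have "F u = 0" using assms(2,3) unfolding slen_def lets_def words_def by auto
    moreover have "(\<Sum>w\<in>words S n. F w * ebasis w u) = 0"
      by (rule sum.neutral) (use False in \<open>auto simp: ebasis_def\<close>)
    ultimately show ?thesis by simp
  qed
qed

lemma NN_expand:
  assumes "finite S" "f \<in> NN act S n"
  obtains F where "f = (\<lambda>u. \<Sum>w\<in>words S n. F w * omega act n (ebasis w) u)"
proof -
  obtain F where f: "f = omega act n F" and sF: "slen F n" and lF: "lets S F" using assms(2) by (rule NN_E)
  have "f = omega act n (\<lambda>u. \<Sum>w\<in>words S n. F w * ebasis w u)" using expand_basis[OF assms(1) sF lF] f by simp
  also have "\<dots> = (\<lambda>u. \<Sum>w\<in>words S n. omega act n (\<lambda>u. F w * ebasis w u) u)"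
    by (rule linop_sum[OF linop_omega finite_words[OF assms(1)]])
  also have "\<dots> = (\<lambda>u. \<Sum>w\<in>words S n. F w * omega act n (ebasis w) u)" by (simp add: omega_smult)
  finally show ?thesis using that by blast
qed

lemma Nichols_eq: assumes "finite S" shows "Nichols act S n = NN act S n"
proof
  show "Nichols act S n \<subseteq> NN act S n" unfolding Nichols_def
  proof (rule lspan_sub[OF vsub_NN])
    show "{omega act n (ebasis w) |w. length w = n \<and> set w \<subseteq> S} \<subseteq> NN act S n"
    proof
      fix f assume "f \<in> {omega act n (ebasis w) |w. length w = n \<and> set w \<subseteq> S}"
      then obtain w where "f = omega act n (ebasis w)" "length w = n" "set w \<subseteq> S" by blast
      moreover have "slen (ebasis w) (length w)" "lets S (ebasis w)" if "set w \<subseteq> S"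
        using that by (auto simp: slen_def lets_def ebasis_def)
      ultimately show "f \<in> NN act S n" using NN_I by metis
    qed
  qed
next
  show "NN act S n \<subseteq> Nichols act S n"
  proof
    fix f assume "f \<in> NN act S n"
    then obtain F where f: "f = (\<lambda>u. \<Sum>w\<in>words S n. F w * omega act n (ebasis w) u)"
      using NN_expand[OF assms] by blast
    show "f \<in> Nichols act S n" unfolding f Nichols_def
    proof (rule vsub_sum[OF lspan_vsub finite_words[OF assms]])
      fix w assume "w \<in> words S n"
      then have "omega act n (ebasis w) \<in> lspan {omega act n (ebasis w) |w. length w = n \<and> set w \<subseteq> S}"
        by (intro lspan_base) (auto simp: words_def)
      then show "(\<lambda>u. F w * omega act n (ebasis w) u) \<in> lspan {omega act n (ebasis w) |w. length w = n \<and> set w \<subseteq> S}"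
        by (rule vsub_smult[OF lspan_vsub])
    qed
  qed
qed

lemma prod_ind: "(\<Prod>k<(n::nat). if P k then (1::'k::field) else 0) = (if \<forall>k<n. P k then 1 else 0)"
  by (induction n) (auto simp: less_Suc_eq)

definition WA :: "'g set \<Rightarrow> ('g \<Rightarrow> 'k::zero) set" where
  "WA A = {w. \<forall>g. w g \<noteq> 0 \<longrightarrow> g \<in> A}"

definition dl :: "'g \<Rightarrow> 'g \<Rightarrow> 'k::{zero,one}" where
  "dl x = (\<lambda>g. if g = x then 1 else 0)"

lemma tens_dl: "tens (map dl w) = (ebasis w :: ('g,'k::field) tvec)"
proof (rule ext)
  fix u :: "'g list"
  show "tens (map dl w) u = ebasis w u"
  proof (cases "length u = length w")
    case True
    have "tens (map dl w) u = (\<Prod>k<length w. (map dl w ! k) (u ! k))" using True by (simp add: tens_def)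
    also have "\<dots> = (\<Prod>k<length w. if u ! k = w ! k then 1 else 0)"
      by (rule prod.cong) (auto simp: dl_def)
    also have "\<dots> = (if \<forall>k<length w. u ! k = w ! k then 1 else 0)"
      by (rule prod_ind)
    also have "\<dots> = ebasis w u" using True by (auto simp: ebasis_def list_eq_iff_nth_eq)
    finally show ?thesis .
  next
    case False
    then show ?thesis by (auto simp: tens_def ebasis_def)
  qed
qed

lemma tens_lets: assumes "set vs \<subseteq> WA A" shows "lets A (tens vs :: ('g,'k::field) tvec)"
  unfolding lets_def
proof (intro allI impI)
  fix u :: "'g list" assume nz: "tens vs u \<noteq> (0::'k)"
  then have l: "length u = length vs" by (auto simp: tens_def split: if_splits)
  have p: "(\<Prod>k<length vs. (vs ! k) (u ! k)) \<noteq> (0::'k)" using nz l by (simp add: tens_def)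
  show "set u \<subseteq> A" unfolding set_subset_nth
  proof (intro allI impI)
    fix k assume k: "k < length u"
    then have "(vs ! k) (u ! k) \<noteq> 0" using p l by (metis finite_lessThan lessThan_iff prod_zero)
    moreover have "vs ! k \<in> WA A" using assms k l by (metis nth_mem subsetD)
    ultimately show "u ! k \<in> A" unfolding WA_def by blast
  qed
qed

lemma tens_slen: "slen (tens vs) (length vs)"
  unfolding slen_def tens_def by auto

lemma genW_eq: assumes "finite A" shows "genW act (WA A) n = NN act A n"
proof
  show "genW act (WA A) n \<subseteq> NN act A n" unfolding genW_def
  proof (rule lspan_sub[OF vsub_NN])
    show "{omega act n (tens vs) |vs. length vs = n \<and> set vs \<subseteq> WA A} \<subseteq> NN act A n"
      using NN_I tens_slen tens_lets by blast
  qed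
next
  show "NN act A n \<subseteq> genW act (WA A) n"
  proof
    fix f assume "f \<in> NN act A n"
    then obtain F where f: "f = (\<lambda>u. \<Sum>w\<in>words A n. F w * omega act n (ebasis w) u)"
      using NN_expand[OF assms] by blast
    show "f \<in> genW act (WA A) n" unfolding f genW_def
    proof (rule vsub_sum[OF lspan_vsub finite_words[OF assms]])
      fix w assume w: "w \<in> words A n"
      have "set (map dl w) \<subseteq> WA A" using w by (auto simp: words_def WA_def dl_def split: if_splits)
      then have "omega act n (tens (map dl w)) \<in> lspan {omega act n (tens vs) |vs. length vs = n \<and> set vs \<subseteq> WA A}"
        using w by (intro lspan_base) (auto simp: words_def intro!: exI[of _ "map dl w"])
      then show "(\<lambda>u. F w * omega act n (ebasis w) u) \<in> lspan {omega act n (tens vs) |vs. length vs = n \<and> set vs \<subseteq> WA A}"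
        unfolding tens_dl by (rule vsub_smult[OF lspan_vsub])
    qed
  qed
qed


lemma rank_tspan:
  fixes H :: "'a \<times> 'b \<Rightarrow> 'k::field"
  assumes C: "vsubspace C" and D: "vsubspace D" and X: "finite X"
  shows "(\<forall>u v. H (u, v) \<noteq> 0 \<longrightarrow> u \<in> X) \<Longrightarrow> (\<forall>v. (\<lambda>u. H (u, v)) \<in> C) \<Longrightarrow> (\<forall>u. (\<lambda>v. H (u, v)) \<in> D)
    \<Longrightarrow> H \<in> tspan C D"
proof (induction "card {u\<in>X. \<exists>v. H (u, v) \<noteq> 0}" arbitrary: H rule: less_induct)
  case less
  show ?case
  proof (cases "\<forall>u v. H (u, v) = 0")
    case True
    then have "H = (\<lambda>(u, v). sum_list (map (\<lambda>(a, c). a u * c v) []))" by (auto simp: fun_eq_iff)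
    then show ?thesis unfolding tspan_def by (intro CollectI exI[of _ "[]"]) simp
  next
    case False
    then obtain u0 v0 where nz: "H (u0, v0) \<noteq> 0" by blast
    define c0 where "c0 = (\<lambda>u. H (u, v0))"
    define d0 where "d0 = (\<lambda>v. inverse (H (u0, v0)) * H (u0, v))"
    define H' where "H' = (\<lambda>(u, v). H (u, v) - c0 u * d0 v)"
    have c0C: "c0 \<in> C" using less.prems(2) by (simp add: c0_def)
    have d0D: "d0 \<in> D" unfolding d0_def using less.prems(3) vsub_smult[OF D] by blast
    have supp': "\<forall>u v. H' (u, v) \<noteq> 0 \<longrightarrow> u \<in> X"
    proof (intro allI impI)
      fix u v assume "H' (u, v) \<noteq> 0"
      then have "H (u, v) \<noteq> 0 \<or> H (u, v0) \<noteq> 0" by (auto simp: H'_def c0_def)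
      then show "u \<in> X" using less.prems(1) by blast
    qed
    have cols': "\<forall>v. (\<lambda>u. H' (u, v)) \<in> C"
    proof
      fix v
      have "(\<lambda>u. d0 v * c0 u) \<in> C" by (rule vsub_smult[OF C c0C])
      then have "(\<lambda>u. H (u, v) - d0 v * c0 u) \<in> C" using vsub_diff[OF C] less.prems(2) by blast
      then show "(\<lambda>u. H' (u, v)) \<in> C" by (simp add: H'_def mult.commute)
    qed
    have rows': "\<forall>u. (\<lambda>v. H' (u, v)) \<in> D"
    proof
      fix u
      have "(\<lambda>v. c0 u * d0 v) \<in> D" by (rule vsub_smult[OF D d0D])
      then have "(\<lambda>v. H (u, v) - c0 u * d0 v) \<in> D" using vsub_diff[OF D] less.prems(3) by blast
      then show "(\<lambda>v. H' (u, v)) \<in> D" by (simp add: H'_def)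
    qed
    let ?R = "{u\<in>X. \<exists>v. H (u, v) \<noteq> 0}" and ?R' = "{u\<in>X. \<exists>v. H' (u, v) \<noteq> 0}"
    have sub: "?R' \<subseteq> ?R - {u0}"
    proof
      fix u assume u: "u \<in> ?R'"
      then obtain v where v: "H' (u, v) \<noteq> 0" by blast
      then have "H (u, v) \<noteq> 0 \<or> H (u, v0) \<noteq> 0" by (auto simp: H'_def c0_def)
      moreover have "u \<noteq> u0"
      proof
        assume "u = u0"
        then have "H' (u, v) = H (u0, v) - H (u0, v0) * (inverse (H (u0, v0)) * H (u0, v))"
          by (simp add: H'_def c0_def d0_def)
        also have "\<dots> = 0" using nz by simp
        finally show False using v by simp
      qed
      ultimately show "u \<in> ?R - {u0}" using u by blast
    qed
    have u0R: "u0 \<in> ?R" using nz less.prems(1) by blast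
    have "finite ?R" using X by simp
    moreover have "?R' \<subset> ?R" using sub u0R by blast
    ultimately have "card ?R' < card ?R" by (rule psubset_card_mono)
    then have "H' \<in> tspan C D" using less.hyps supp' cols' rows' by blast
    then obtain ps where ps: "set ps \<subseteq> C \<times> D" "H' = (\<lambda>(u, v). sum_list (map (\<lambda>(a, c). a u * c v) ps))"
      unfolding tspan_def by blast
    have "H = (\<lambda>(u, v). sum_list (map (\<lambda>(a, c). a u * c v) ((c0, d0) # ps)))"
    proof (rule ext, clarify)
      fix u v
      have "H' (u, v) = sum_list (map (\<lambda>(a, c). a u * c v) ps)" using ps(2) by simp
      then show "H (u, v) = sum_list (map (\<lambda>(a, c). a u * c v) ((c0, d0) # ps))"
        by (simp add: H'_def algebra_simps)
    qed
    moreover have "set ((c0, d0) # ps) \<subseteq> C \<times> D" using ps(1) c0C d0D by auto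
    ultimately show ?thesis unfolding tspan_def by blast
  qed
qed

definition MM :: "('g::group_add \<Rightarrow> 'g \<Rightarrow> 'k::field) \<Rightarrow> 'g set \<Rightarrow> 'g set \<Rightarrow> nat \<Rightarrow> ('g,'k) tvec set" where
  "MM act S A n = {f \<in> NN act S n. \<forall>u x. x \<notin> A \<longrightarrow> f (u @ [x]) = 0}"

lemma vsub_MM: "vsubspace (MM act S A n)"
  unfolding vsubspace_def MM_def
proof (intro conjI ballI allI)
  have "(\<lambda>_. 0) \<in> NN act S n" by (rule vsub_zero[OF vsub_NN])
  then show "(\<lambda>_. 0) \<in> {f \<in> NN act S n. \<forall>u x. x \<notin> A \<longrightarrow> f (u @ [x]) = 0}" by simp
next
  fix x y assume "x \<in> {f \<in> NN act S n. \<forall>u x. x \<notin> A \<longrightarrow> f (u @ [x]) = 0}" "y \<in> {f \<in> NN act S n. \<forall>u x. x \<notin> A \<longrightarrow> f (u @ [x]) = 0}"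
  then show "(\<lambda>u. x u + y u) \<in> {f \<in> NN act S n. \<forall>u x. x \<notin> A \<longrightarrow> f (u @ [x]) = 0}"
    by (auto intro!: vsub_add[OF vsub_NN])
next
  fix c x assume "x \<in> {f \<in> NN act S n. \<forall>u x. x \<notin> A \<longrightarrow> f (u @ [x]) = 0}"
  then show "(\<lambda>u. c * x u) \<in> {f \<in> NN act S n. \<forall>u x. x \<notin> A \<longrightarrow> f (u @ [x]) = 0}"
    by (auto intro!: vsub_smult[OF vsub_NN])
qed

lemma Tsp_iff: "f \<in> Tsp S n \<longleftrightarrow> slen f n \<and> lets S f"
  unfolding Tsp_def slen_def lets_def by blast

lemma MM1:
  fixes act :: "'g::group_add \<Rightarrow> 'g \<Rightarrow> 'k::field"
  assumes "A \<subseteq> S" shows "MM act S A (Suc 0) = (\<lambda>v. tens [v]) ` WA A"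
proof
  show "MM act S A (Suc 0) \<subseteq> (\<lambda>v. tens [v]) ` WA A"
  proof
    fix f assume f: "f \<in> MM act S A (Suc 0)"
    then have fN: "f \<in> NN act S (Suc 0)" and fA: "\<forall>u x. x \<notin> A \<longrightarrow> f (u @ [x]) = 0" unfolding MM_def by auto
    have sf: "slen f (Suc 0)" by (rule NN_slen[OF fN])
    define v where "v = (\<lambda>g. f [g])"
    have "\<forall>g. v g \<noteq> 0 \<longrightarrow> g \<in> A"
    proof (intro allI impI)
      fix g assume vg: "v g \<noteq> 0"
      show "g \<in> A"
      proof (rule ccontr)
        assume "g \<notin> A"
        then have "f ([] @ [g]) = 0" using fA by blast
        then show False using vg by (simp add: v_def)
      qed
    qed
    then have "v \<in> WA A" unfolding WA_def by blast
    moreover have "f = tens [v]"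
    proof (rule ext)
      fix u show "f u = tens [v] u"
      proof (cases "length u = 1")
        case True
        then obtain g where "u = [g]" by (metis One_nat_def length_0_conv length_Suc_conv)
        then show ?thesis by (simp add: tens_def v_def)
      next
        case False
        then show ?thesis using sf by (auto simp: tens_def slen_def)
      qed
    qed
    ultimately show "f \<in> (\<lambda>v. tens [v]) ` WA A" by blast
  qed
next
  show "(\<lambda>v. tens [v]) ` WA A \<subseteq> MM act S A (Suc 0)"
  proof
    fix f :: "('g,'k) tvec" assume "f \<in> (\<lambda>v. tens [v]) ` WA A"
    then obtain v where v: "v \<in> WA A" "f = tens [v]" by blast
    have "slen (tens [v]) (Suc 0)" using tens_slen[of "[v]"] by simp
    moreover have "lets S (tens [v])"
    proof -
      have "lets A (tens [v])" by (rule tens_lets) (use v(1) in simp)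
      then show ?thesis using assms unfolding lets_def by blast
    qed
    ultimately have "omega act (Suc 0) (tens [v]) \<in> NN act S (Suc 0)" by (rule NN_I)
    then have "f \<in> NN act S (Suc 0)" using v by (simp add: omega1)
    moreover have "\<forall>u x. x \<notin> A \<longrightarrow> f (u @ [x]) = 0"
    proof (intro allI impI)
      fix u x assume "x \<notin> A"
      then have "v x = 0" using v(1) unfolding WA_def by blast
      then show "f (u @ [x]) = 0" unfolding v(2) by (cases u) (simp_all add: tens_def)
    qed
    ultimately show "f \<in> MM act S A (Suc 0)" unfolding MM_def by blast
  qed
qed

lemma sum_list_zero_snd: "(\<forall>p\<in>set ps. snd p z = 0) \<Longrightarrow> sum_list (map (\<lambda>(a, c). a u * c z) ps) = (0::'k::field)"
  by (induction ps) auto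

lemma LCS_sub_MM:
  fixes act :: "'g::group_add \<Rightarrow> 'g \<Rightarrow> 'k::field"
  assumes fin: "finite S" and K: "graded_lcs act S K" and K1: "K 1 = (\<lambda>v. tens [v]) ` WA A"
  shows "K n \<subseteq> MM act S A n"
proof
  fix f assume f: "f \<in> K n"
  have KN: "K n \<subseteq> Nichols act S n" using K unfolding graded_lcs_def by blast
  then have fN: "f \<in> NN act S n" using f Nichols_eq[OF fin] by auto
  have sf: "slen f n" by (rule NN_slen[OF fN])
  have "f (u @ [x]) = 0" if x: "x \<notin> A" for u x
  proof (cases n)
    case 0
    then show ?thesis using sf unfolding slen_def by auto
  next
    case (Suc m)
    then have "f \<in> K (m + 1)" using f by simp
    then have "deconc m 1 f \<in> tspan (Nichols act S m) (K 1)" using K unfolding graded_lcs_def by blast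
    then obtain ps where ps: "set ps \<subseteq> Nichols act S m \<times> K 1" "deconc m 1 f = (\<lambda>(u, v). sum_list (map (\<lambda>(a, c). a u * c v) ps))"
      unfolding tspan_def by blast
    show ?thesis
    proof (cases "length u = m")
      case True
      have "f (u @ [x]) = deconc m 1 f (u, [x])" using True by (simp add: deconc_def)
      also have "\<dots> = sum_list (map (\<lambda>(a, c). a u * c [x]) ps)" using ps(2) by simp
      also have "\<dots> = 0"
      proof (rule sum_list_zero_snd, rule ballI)
        fix p assume "p \<in> set ps"
        then have "snd p \<in> K 1" using ps(1) by auto
        then obtain v where vW: "v \<in> WA A" and sp: "snd p = tens [v]" using K1 by auto
        have "v x = 0" using vW x unfolding WA_def by blast
        then show "snd p [x] = 0" unfolding sp by (simp add: tens_def)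
      qed
      finally show ?thesis .
    next
      case False
      then show ?thesis using sf Suc unfolding slen_def by auto
    qed
  qed
  then show "f \<in> MM act S A n" unfolding MM_def using fN by blast
qed

lemma ebasis_snoc: "ebasis (w @ [x]) = tconcat (length w) 1 (ebasis w) (ebasis [x])"
proof (rule ext)
  fix u :: "'a list"
  show "ebasis (w @ [x]) u = (tconcat (length w) 1 (ebasis w) (ebasis [x]) :: ('a, 'b) tvec) u"
  proof (cases "length u = Suc (length w)")
    case True
    have "(w @ [x] = u) = (w = take (length w) u \<and> [x] = drop (length w) u)"
      by (rule append_eq_conv_conj)
    then show ?thesis using True by (auto simp: ebasis_def tconcat_def)
  next
    case False
    then have "u \<noteq> w @ [x]" by auto
    then show ?thesis using False by (simp add: ebasis_def tconcat_def)
  qed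
qed

lemma NN_sub_LCS:
  fixes act :: "'g::group_add \<Rightarrow> 'g \<Rightarrow> 'k::field"
  assumes finA: "finite A" and AS: "A \<subseteq> S" and K: "graded_lcs act S K" and K1: "K 1 = (\<lambda>v. tens [v]) ` WA A"
  shows "NN act A n \<subseteq> K n"
proof
  have vK: "\<And>n. vsubspace (K n)" using K unfolding graded_lcs_def by blast
  have base: "omega act (length w) (ebasis w) \<in> K (length w)" if "set w \<subseteq> A" for w
    using that
  proof (induction w rule: rev_induct)
    case Nil
    then show ?case using K unfolding graded_lcs_def by simp
  next
    case (snoc x w)
    have IH: "omega act (length w) (ebasis w) \<in> K (length w)" using snoc by simp
    have xA: "x \<in> A" using snoc by simp
    have t1: "ebasis w \<in> Tsp S (length w)" using snoc AS by (auto simp: Tsp_def ebasis_def)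
    have t2: "ebasis [x] \<in> Tsp S 1" using xA AS by (auto simp: Tsp_def ebasis_def)
    have "(ebasis [x] :: ('g,'k) tvec) = tens [dl x]" by (simp add: tens_dl[of "[x]", simplified])
    moreover have "dl x \<in> WA A" using xA by (auto simp: WA_def dl_def split: if_splits)
    ultimately have "ebasis [x] \<in> K 1" using K1 by auto
    then have t3: "omega act 1 (ebasis [x]) \<in> K 1" by (simp add: omega1)
    have "omega act (length w + 1) (tconcat (length w) 1 (ebasis w) (ebasis [x])) \<in> K (length w + 1)"
      using K t1 t2 IH t3 unfolding graded_lcs_def by blast
    then show ?case by (simp add: ebasis_snoc)
  qed
  fix f assume "f \<in> NN act A n"
  then obtain F where f: "f = (\<lambda>u. \<Sum>w\<in>words A n. F w * omega act n (ebasis w) u)"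
    using NN_expand[OF finA] by blast
  show "f \<in> K n" unfolding f
  proof (rule vsub_sum[OF vK finite_words[OF finA]])
    fix w assume "w \<in> words A n"
    then have "omega act n (ebasis w) \<in> K n" using base unfolding words_def by auto
    then show "(\<lambda>u. F w * omega act n (ebasis w) u) \<in> K n" by (rule vsub_smult[OF vK])
  qed
qed


lemma MM_LCS:
  fixes act :: "'g::group_add \<Rightarrow> 'g \<Rightarrow> 'k::field"
  assumes cc: "cc S" and yd: "yd act S" and fin: "finite S" and AS: "A \<subseteq> S"
  shows "graded_lcs act S (MM act S A)"
  unfolding graded_lcs_def
proof (intro conjI allI impI)
  fix n
  show "vsubspace (MM act S A n)" by (rule vsub_MM)
  show "MM act S A n \<subseteq> Nichols act S n" unfolding Nichols_eq[OF fin] MM_def by blast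
next
  have "slen (ebasis [] :: ('g,'k) tvec) 0" "lets S (ebasis [] :: ('g,'k) tvec)"
    by (auto simp: slen_def lets_def ebasis_def)
  then have "omega act 0 (ebasis []) \<in> NN act S 0" by (rule NN_I)
  then show "ebasis [] \<in> MM act S A 0" unfolding MM_def by (simp add: ebasis_def)
next
  fix i j a b
  assume H: "a \<in> Tsp S i \<and> b \<in> Tsp S j \<and> omega act i a \<in> MM act S A i \<and> omega act j b \<in> MM act S A j"
  have sa: "slen a i" and la: "lets S a" and sb: "slen b j" and lb: "lets S b"
    using H Tsp_iff by blast+
  have ma: "\<And>u x. x \<notin> A \<Longrightarrow> omega act i a (u @ [x]) = 0" and mb: "\<And>u x. x \<notin> A \<Longrightarrow> omega act j b (u @ [x]) = 0"
    using H unfolding MM_def by blast+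
  have NNp: "omega act (i + j) (tconcat i j a b) \<in> NN act S (i + j)"
    by (rule NN_I[OF slen_tconcat lets_tconcat[OF la lb]])
  have "sl x (omega act (i + j) (tconcat i j a b)) = (\<lambda>_. 0)" if x: "x \<notin> A" for x
  proof -
    have za: "sl x (omega act i a) = (\<lambda>_. 0)" using ma[OF x] by (simp add: sl_def fun_eq_iff)
    have zb: "sl x (omega act j b) = (\<lambda>_. 0)" using mb[OF x] by (simp add: sl_def fun_eq_iff)
    consider (j0) "j = 0" | (i0) "i = 0" | (ss) i' j' where "i = Suc i'" "j = Suc j'"
      by (metis not0_implies_Suc)
    then show ?thesis
    proof cases
      case j0
      have "omega act (i + j) (tconcat i j a b) = (\<lambda>w. b [] * omega act i a w)"
        using tconcat_0r[OF sa] j0 omega_smult by simp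
      then show ?thesis using za by (simp add: sl_def fun_eq_iff)
    next
      case i0
      have "omega act (i + j) (tconcat i j a b) = (\<lambda>w. a [] * omega act j b w)"
        using tconcat_0l[OF sb] i0 omega_smult by simp
      then show ?thesis using zb by (simp add: sl_def fun_eq_iff)
    next
      case ss
      have sa': "slen a (Suc i')" and sb': "slen b (Suc j')" using sa sb ss by auto
      have e: "sl x (omega act (i + j) (tconcat i j a b)) = (\<lambda>w. omega act (Suc i' + j') (tconcat (Suc i') j' a (sl x (Tn act j' b))) w
              + omega act (Suc i' + j') (tconcat i' (Suc j') (sl x (Tn act i' a)) (gact act x b)) w)"
        using omega_tconcat_sl[OF sa' sb', of x act] ss by simp
      have o1: "omega act j' (sl x (Tn act j' b)) = (\<lambda>_. 0)" using sl_omega_Suc[OF sb'] zb ss by simp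
      have o2: "omega act i' (sl x (Tn act i' a)) = (\<lambda>_. 0)" using sl_omega_Suc[OF sa'] za ss by simp
      have T1: "omega act (Suc i' + j') (tconcat (Suc i') j' a (sl x (Tn act j' b))) = (\<lambda>_. 0)"
        using dep_zero[OF cc yd sa' la[unfolded ss] slen_sl[OF slen_Tn[OF sb']] lets_sl[OF lets_Tn[OF cc lb]]] o1 by blast
      have T2: "omega act (i' + Suc j') (tconcat i' (Suc j') (sl x (Tn act i' a)) (gact act x b)) = (\<lambda>_. 0)"
        using dep_zero[OF cc yd slen_sl[OF slen_Tn[OF sa']] lets_sl[OF lets_Tn[OF cc la]] slen_gact[OF sb'] lets_gact[OF cc lb]] o2 by blast
      show ?thesis using e T1 T2 by simp
    qed
  qed
  then have "\<forall>u x. x \<notin> A \<longrightarrow> omega act (i + j) (tconcat i j a b) (u @ [x]) = 0"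
    by (metis sl_def)
  then show "omega act (i + j) (tconcat i j a b) \<in> MM act S A (i + j)" using NNp unfolding MM_def by blast
next
  fix i j and f :: "('g,'k) tvec"
  assume f: "f \<in> MM act S A (i + j)"
  have fN: "f \<in> NN act S (i + j)" and fA: "\<forall>u x. x \<notin> A \<longrightarrow> f (u @ [x]) = 0" using f unfolding MM_def by blast+
  have sf: "slen f (i + j)" by (rule NN_slen[OF fN])
  have lf: "lets S f" by (rule NN_lets[OF cc fN])
  have vN: "vsubspace (Nichols act S i)" using Nichols_eq[OF fin] vsub_NN by metis
  show "deconc i j f \<in> tspan (Nichols act S i) (MM act S A j)"
  proof (rule rank_tspan[OF vN vsub_MM finite_words[OF fin]])
    show "\<forall>u v. deconc i j f (u, v) \<noteq> 0 \<longrightarrow> u \<in> words S i"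
    proof (intro allI impI)
      fix u v assume "deconc i j f (u, v) \<noteq> 0"
      then have "length u = i" "f (u @ v) \<noteq> 0" by (auto simp: deconc_def split: if_splits)
      moreover have "set (u @ v) \<subseteq> S" using lf \<open>f (u @ v) \<noteq> 0\<close> unfolding lets_def by blast
      ultimately show "u \<in> words S i" unfolding words_def by auto
    qed
    show "\<forall>v. (\<lambda>u. deconc i j f (u, v)) \<in> Nichols act S i"
    proof
      fix v
      show "(\<lambda>u. deconc i j f (u, v)) \<in> Nichols act S i"
      proof (cases "length v = j")
        case True
        have "(\<lambda>u. deconc i j f (u, v)) = (\<lambda>u. f (u @ v))"
          using True sf by (auto simp: deconc_def slen_def fun_eq_iff)
        moreover have "(\<lambda>u. f (u @ v)) \<in> NN act S i" using sls_NN[OF cc] fN True by blast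
        ultimately show ?thesis by (simp add: Nichols_eq[OF fin])
      next
        case False
        then have "(\<lambda>u. deconc i j f (u, v)) = (\<lambda>_. 0)" by (auto simp: deconc_def fun_eq_iff)
        then show ?thesis using vsub_zero[OF vsub_NN] Nichols_eq[OF fin] by metis
      qed
    qed
    show "\<forall>u. (\<lambda>v. deconc i j f (u, v)) \<in> MM act S A j"
    proof
      fix u
      show "(\<lambda>v. deconc i j f (u, v)) \<in> MM act S A j"
      proof (cases "length u = i")
        case True
        have e: "(\<lambda>v. deconc i j f (u, v)) = (\<lambda>v. f (u @ v))"
          using True sf by (auto simp: deconc_def slen_def fun_eq_iff)
        have "(\<lambda>v. f (u @ v)) \<in> NN act S j" using rws_NN[OF cc yd fin] fN True by blast
        moreover have "\<forall>v x. x \<notin> A \<longrightarrow> f (u @ v @ [x]) = 0" using fA by (metis append_assoc)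
        ultimately show ?thesis unfolding e MM_def by simp
      next
        case False
        then have "(\<lambda>v. deconc i j f (u, v)) = (\<lambda>_. 0)" by (auto simp: deconc_def fun_eq_iff)
        then show ?thesis using vsub_zero[OF vsub_MM] by metis
      qed
    qed
  qed
qed

lemma unique_iff:
  fixes act :: "'g::group_add \<Rightarrow> 'g \<Rightarrow> 'k::field"
  assumes cc: "cc S" and yd: "yd act S" and fin: "finite S" and AS: "A \<subseteq> S"
  shows "unique_lcs act S (WA A) \<longleftrightarrow> (\<forall>n. MM act S A n \<subseteq> NN act A n)"
proof -
  have finA: "finite A" using fin AS finite_subset by blast
  have G: "genW act (WA A) = NN act A" using genW_eq[OF finA] by blast
  have M1: "MM act S A 1 = (\<lambda>v. tens [v]) ` WA A" using MM1[OF AS] by simp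
  have MLcs: "graded_lcs act S (MM act S A)" by (rule MM_LCS[OF cc yd fin AS])
  have NM: "\<And>n. NN act A n \<subseteq> MM act S A n" by (rule NN_sub_LCS[OF finA AS MLcs M1])
  show ?thesis
  proof
    assume "unique_lcs act S (WA A)"
    then have "MM act S A = genW act (WA A)" using MLcs M1 unfolding unique_lcs_def by blast
    then show "\<forall>n. MM act S A n \<subseteq> NN act A n" using G by simp
  next
    assume sub: "\<forall>n. MM act S A n \<subseteq> NN act A n"
    then have MG: "MM act S A = genW act (WA A)" using NM G by (auto simp: fun_eq_iff)
    show "unique_lcs act S (WA A)" unfolding unique_lcs_def
    proof (intro conjI allI impI)
      show "graded_lcs act S (genW act (WA A))" using MLcs MG by simp
      fix K assume K: "graded_lcs act S K \<and> K 1 = (\<lambda>v. tens [v]) ` WA A"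
      have k1: "\<And>n. K n \<subseteq> MM act S A n" using LCS_sub_MM[OF fin] K by blast
      have k2: "\<And>n. NN act A n \<subseteq> K n" using NN_sub_LCS[OF finA AS] K by blast
      show "K = genW act (WA A)"
      proof (rule ext)
        fix n
        have "K n \<subseteq> NN act A n" using k1[of n] sub by blast
        then show "K n = genW act (WA A) n" using k2[of n] G by auto
      qed
    qed
  qed
qed


definition proj :: "'g set \<Rightarrow> ('g,'k::zero) tvec \<Rightarrow> ('g,'k) tvec" where
  "proj T F = (\<lambda>w. if set w \<subseteq> T then F w else 0)"

lemma swap_set:
  assumes "cc T" "Suc i < length w"
  shows "set (w[i := w ! Suc i, Suc i := - (w ! Suc i) + w ! i + w ! Suc i]) \<subseteq> T \<longleftrightarrow> set w \<subseteq> T"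
proof -
  let ?a = "w ! i" and ?b = "w ! Suc i"
  let ?w' = "w[i := ?b, Suc i := - ?b + ?a + ?b]"
  have l: "length ?w' = length w" by simp
  have n1: "?w' ! i = ?b" using assms(2) by simp
  have n2: "?w' ! Suc i = - ?b + ?a + ?b" using assms(2) by simp
  have n3: "?w' ! k = w ! k" if "k \<noteq> i" "k \<noteq> Suc i" for k using that by simp
  show ?thesis
  proof
    assume S': "set ?w' \<subseteq> T"
    show "set w \<subseteq> T" unfolding set_subset_nth
    proof (intro allI impI)
      fix k assume k: "k < length w"
      show "w ! k \<in> T"
      proof (cases "k = i")
        case True
        have "- ?b + ?a + ?b \<in> T" using S' assms(2) l n2 unfolding set_subset_nth by metis
        then have "?b + (- ?b + ?a + ?b) - ?b \<in> T" using assms(1) cc_in by blast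
        then show ?thesis using True grp1 by metis
      next
        case False
        show ?thesis
        proof (cases "k = Suc i")
          case True
          have "?w' ! i \<in> T" using S' assms(2) l unfolding set_subset_nth by (metis Suc_lessD)
          then show ?thesis using True n1 by simp
        next
          case F2: False
          have "?w' ! k \<in> T" using S' k l unfolding set_subset_nth by metis
          then show ?thesis using n3[OF False F2] by simp
        qed
      qed
    qed
  next
    assume S: "set w \<subseteq> T"
    show "set ?w' \<subseteq> T" unfolding set_subset_nth
    proof (intro allI impI)
      fix k assume k: "k < length ?w'"
      show "?w' ! k \<in> T"
      proof (cases "k = i")
        case True
        have "?b \<in> T" using S assms(2) unfolding set_subset_nth by blast
        then show ?thesis using True n1 by simp
      next
        case False
        show ?thesis
        proof (cases "k = Suc i")
          case True
          have "?a \<in> T" using S assms(2) unfolding set_subset_nth by (metis Suc_lessD)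
          then have "phi ?b ?a \<in> T" using assms(1) cc_phi by blast
          then show ?thesis using True n2 by (simp add: phi_def)
        next
          case F2: False
          have "w ! k \<in> T" using S k l unfolding set_subset_nth by metis
          then show ?thesis using n3[OF False F2] by simp
        qed
      qed
    qed
  qed
qed

lemma braid_proj: "cc T \<Longrightarrow> braid act i (proj T F) = proj T (braid act i F)"
  by (auto simp: fun_eq_iff braid_def proj_def Let_def swap_set)

lemma chain_proj: "cc T \<Longrightarrow> chain act k m (proj T F) = proj T (chain act k m F)"
proof (induction k m F rule: chain.induct[where ?a0.0 = act])
  case (1 act k m f)
  show ?case
  proof (cases "k < m")
    case True
    then show ?thesis using 1 by (simp add: chain.simps[of act k m] braid_proj[OF 1(2)])
  next
    case False
    then show ?thesis by (simp add: chain.simps[of act k m])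
  qed
qed

lemma Tn_proj: assumes "cc T" shows "Tn act m (proj T F) = proj T (Tn act m F)"
  unfolding Tn_def chain_proj[OF assms] by (simp add: proj_def fun_eq_iff)

lemma omega_proj: "cc T \<Longrightarrow> omega act m (proj T F) = proj T (omega act m F)"
  by (induction m arbitrary: F) (simp_all add: omega_Suc Tn_proj)

lemma slen_proj: "slen F n \<Longrightarrow> slen (proj T F) n"
  unfolding slen_def proj_def by auto

lemma lets_proj: "lets S F \<Longrightarrow> lets (S \<inter> T) (proj T F)"
  unfolding lets_def proj_def by auto

lemma proj_NN: assumes "cc T" "F \<in> NN act S n" shows "proj T F \<in> NN act (S \<inter> T) n"
proof -
  obtain G where "F = omega act n G" "slen G n" "lets S G" using assms(2) by (rule NN_E)
  then show ?thesis using omega_proj[OF assms(1)] NN_I[OF slen_proj lets_proj] by metis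
qed

lemma lets_mono: "lets S F \<Longrightarrow> S \<subseteq> T \<Longrightarrow> lets T F"
  unfolding lets_def by blast

lemma NN_mono: "S \<subseteq> T \<Longrightarrow> NN act S n \<subseteq> NN act T n"
  unfolding NN_def using lets_mono by blast

definition cnt :: "'g set \<Rightarrow> 'g list \<Rightarrow> nat" where
  "cnt T w = length (filter (\<lambda>x. x \<in> T) w)"

definition scnt :: "'g set \<Rightarrow> ('g,'k::zero) tvec \<Rightarrow> nat \<Rightarrow> bool" where
  "scnt T F k \<longleftrightarrow> (\<forall>w. F w \<noteq> 0 \<longrightarrow> cnt T w = k)"

lemma cnt_swap:
  assumes "cc T" "Suc i < length w"
  shows "cnt T (w[i := w ! Suc i, Suc i := - (w ! Suc i) + w ! i + w ! Suc i]) = cnt T w"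
proof -
  define p where "p = take i w"
  define a where "a = w ! i"
  define b where "b = w ! Suc i"
  define q where "q = drop (Suc (Suc i)) w"
  have w: "w = p @ a # b # q" unfolding p_def a_def b_def q_def by (rule split_word2[OF assms(2)])
  have lp: "length p = i" using assms(2) by (simp add: p_def)
  have e: "w[i := w ! Suc i, Suc i := - (w ! Suc i) + w ! i + w ! Suc i] = p @ b # (- b + a + b) # q"
    unfolding w using lp by (simp add: list_update_append nth_append)
  have "(- b + a + b \<in> T) = (a \<in> T)"
  proof
    assume "- b + a + b \<in> T"
    then have "b + (- b + a + b) - b \<in> T" using assms(1) cc_in by blast
    then show "a \<in> T" using grp1 by metis
  next
    assume "a \<in> T"
    then have "phi b a \<in> T" using assms(1) cc_phi by blast
    then show "- b + a + b \<in> T" by (simp add: phi_def)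
  qed
  then show ?thesis unfolding e unfolding w cnt_def by simp
qed

lemma scnt_braid: "cc T \<Longrightarrow> scnt T F k \<Longrightarrow> scnt T (braid act i F) k"
  unfolding scnt_def braid_def by (auto simp: Let_def cnt_swap split: if_splits)

lemma scnt_chain: "cc T \<Longrightarrow> scnt T F k \<Longrightarrow> scnt T (chain act j m F) k"
proof (induction j m F rule: chain.induct[where ?a0.0 = act])
  case (1 act j m f)
  show ?case
  proof (cases "j < m")
    case True
    then show ?thesis using 1 scnt_braid[OF 1(2,3)] by (simp add: chain.simps[of act j m])
  next
    case False
    then show ?thesis using 1 by (simp add: chain.simps[of act j m])
  qed
qed

lemma scnt_Tn: assumes "cc T" "scnt T F k" shows "scnt T (Tn act m F) k"
  unfolding scnt_def Tn_def
proof (intro allI impI)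
  fix w assume "(\<Sum>j\<le>m. chain act j m F w) \<noteq> 0"
  then obtain j where "chain act j m F w \<noteq> 0" using sum.neutral by (metis (no_types, lifting))
  then show "cnt T w = k" using scnt_chain[OF assms] unfolding scnt_def by blast
qed

lemma scnt_omega: "cc T \<Longrightarrow> scnt T F k \<Longrightarrow> scnt T (omega act m F) k"
  by (induction m arbitrary: F) (auto simp: omega_Suc scnt_Tn)


definition mixok :: "('g::group_add \<Rightarrow> 'g \<Rightarrow> 'k::field) \<Rightarrow> 'g set \<Rightarrow> 'g set \<Rightarrow> bool" where
  "mixok act S1 S2 \<longleftrightarrow> (\<forall>s\<in>S2. \<forall>t\<in>S1. s + t = t + s \<and> act s t * act t s = 1)"

lemma grp_comm: "- t + s + t = (s::'g::group_add) \<Longrightarrow> s + t = t + s"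
proof -
  assume h: "- t + s + t = s"
  have "t + (- t + s + t) = s + t" by (simp only: add.assoc[symmetric] add.right_inverse) (simp add: add.assoc)
  then show ?thesis using h by simp
qed

lemma phi_comm: "a + b = b + (a::'g::group_add) \<Longrightarrow> phi b a = a"
proof -
  assume h: "a + b = b + a"
  have "phi b a = - b + (a + b)" by (simp add: phi_def add.assoc)
  also have "\<dots> = a" unfolding h by (simp add: add.assoc[symmetric])
  finally show ?thesis .
qed

lemma csq_mixok:
  fixes act :: "'g::group_add \<Rightarrow> 'g \<Rightarrow> 'k::field"
  assumes "\<forall>s\<in>S2. \<forall>t\<in>S1. braid act 0 (braid act 0 (ebasis [s, t])) = ebasis [s, t]"
  shows "mixok act S1 S2"
  unfolding mixok_def
proof (intro ballI)
  fix s t assume st: "s \<in> S2" "t \<in> S1"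
  have e: "braid act 0 (braid act 0 (ebasis [s, t])) [s, t] = (1::'k)" using assms st by (simp add: ebasis_def)
  let ?t' = "- t + s + t"
  let ?t'' = "- ?t' + t + ?t'"
  have "braid act 0 (braid act 0 (ebasis [s, t])) [s, t] = act t ?t' * (act ?t' ?t'' * (if [?t', ?t''] = [s, t] then 1 else 0))"
    by (simp add: braid_def Let_def ebasis_def)
  then have h: "act t ?t' * (act ?t' ?t'' * (if [?t', ?t''] = [s, t] then 1 else 0)) = (1::'k)" using e by simp
  then have c1: "?t' = s" by (auto split: if_splits)
  then have comm: "s + t = t + s" by (rule grp_comm)
  have "?t'' = t" using c1 phi_comm[of t s] comm unfolding phi_def by simp
  then have "act t s * act s t = 1" using h c1 by simp
  then show "s + t = t + s \<and> act s t * act t s = 1" using comm by (simp add: mult.commute)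
qed

lemma mixed_sym:
  fixes act :: "'g::group_add \<Rightarrow> 'g \<Rightarrow> 'k::field"
  assumes cc: "cc S" and yd: "yd act S" and fin: "finite S"
    and ab: "a + b = b + a" "act a b * act b a = 1"
    and F: "F \<in> NN act S (length p + Suc (Suc 0) + length q)"
  shows "F (p @ a # b # q) = act b a * F (p @ b # a # q)"
proof -
  have "(\<lambda>v. F (p @ v @ q)) \<in> NN act S (Suc (Suc 0))" by (rule mid_NN[OF cc yd fin F])
  then obtain g where G: "(\<lambda>v. F (p @ v @ q)) = omega act (Suc (Suc 0)) g" and sg: "slen g (Suc (Suc 0))"
    by (rule NN_E) blast
  have ev: "omega act (Suc (Suc 0)) g [x, y] = act y (phi y x) * g [y, phi y x] + g [x, y]" for x y
  proof -
    have "omega act (Suc (Suc 0)) g ([x] @ [y]) = (\<Sum>k\<le>Suc 0. gc act y (drop k [x]) * g (take k [x] @ [y] @ map (phi y) (drop k [x])))"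
      unfolding omega2 by (rule Tn_explicit) simp
    then show ?thesis by (simp add: atMost_Suc gc_Cons)
  qed
  have pa: "phi b a = a" by (rule phi_comm[OF ab(1)])
  have pb: "phi a b = b" using phi_comm[of b a] ab(1) by simp
  have 1: "F (p @ a # b # q) = act b a * g [b, a] + g [a, b]"
    using fun_cong[OF G, of "[a, b]"] ev[of a b] pa by simp
  have 2: "F (p @ b # a # q) = act a b * g [a, b] + g [b, a]"
    using fun_cong[OF G, of "[b, a]"] ev[of b a] pb by simp
  have "act b a * (act a b * g [a, b] + g [b, a]) = act b a * g [b, a] + g [a, b]"
    using ab(2) by (simp add: algebra_simps)
  then show ?thesis using 1 2 by simp
qed

lemma move_left:
  fixes act :: "'g::group_add \<Rightarrow> 'g \<Rightarrow> 'k::field"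
  assumes cc: "cc S" and yd: "yd act S" and fin: "finite S" and mix: "mixok act S1 S2"
    and F: "F \<in> NN act S n" and x: "x \<in> S1"
  shows "set v \<subseteq> S2 \<Longrightarrow> (F (u @ v @ [x]) = 0 \<longleftrightarrow> F (u @ [x] @ v) = 0)"
proof (induction v arbitrary: u)
  case Nil
  then show ?case by simp
next
  case (Cons y v)
  have y: "y \<in> S2" and v: "set v \<subseteq> S2" using Cons.prems by auto
  have IH: "F ((u @ [y]) @ v @ [x]) = 0 \<longleftrightarrow> F ((u @ [y]) @ [x] @ v) = 0" using Cons.IH[OF v] .
  have m: "y + x = x + y" "act y x * act x y = 1" using mix y x unfolding mixok_def by auto
  have "F (u @ y # x # v) = 0 \<longleftrightarrow> F (u @ x # y # v) = 0"
  proof (cases "length u + Suc (Suc 0) + length v = n")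
    case True
    have "F (u @ y # x # v) = act x y * F (u @ x # y # v)"
      using mixed_sym[OF cc yd fin m] F True by blast
    moreover have "act x y \<noteq> 0" using m(2) by auto
    ultimately show ?thesis by simp
  next
    case False
    have s: "slen F n" by (rule NN_slen[OF F])
    then have "F (u @ y # x # v) = 0" "F (u @ x # y # v) = 0" using False unfolding slen_def by auto
    then show ?thesis by simp
  qed
  then show ?case using IH by simp
qed

lemma sorted_zero:
  fixes act :: "'g::group_add \<Rightarrow> 'g \<Rightarrow> 'k::field"
  assumes cc: "cc S" and yd: "yd act S" and fin: "finite S" and mix: "mixok act S1 S2"
    and S: "S = S1 \<union> S2"
  shows "\<forall>F. F \<in> NN act S n \<longrightarrow> (\<forall>u v. set u \<subseteq> S1 \<longrightarrow> set v \<subseteq> S2 \<longrightarrow> F (u @ v) = 0) \<longrightarrow> F = (\<lambda>_. 0)"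
proof (induction n)
  case 0
  show ?case
  proof (intro allI impI ext)
    fix F :: "('g,'k) tvec" and w
    assume F: "F \<in> NN act S 0" and z: "\<forall>u v. set u \<subseteq> S1 \<longrightarrow> set v \<subseteq> S2 \<longrightarrow> F (u @ v) = 0"
    show "F w = 0"
    proof (cases "w = []")
      case True
      then show ?thesis using z[rule_format, of "[]" "[]"] by simp
    next
      case False
      then show ?thesis using NN_slen[OF F] unfolding slen_def by auto
    qed
  qed
next
  case (Suc m)
  show ?case
  proof (intro allI impI)
    fix F :: "('g,'k) tvec"
    assume F: "F \<in> NN act S (Suc m)" and z: "\<forall>u v. set u \<subseteq> S1 \<longrightarrow> set v \<subseteq> S2 \<longrightarrow> F (u @ v) = 0"
    show "F = (\<lambda>_. 0)"
    proof (rule zero_by_sl[OF NN_slen[OF F]])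
      fix x
      have slN: "sl x F \<in> NN act S m" by (rule sl_NN[OF cc F])
      show "sl x F = (\<lambda>_. 0)"
      proof (cases "x \<in> S")
        case False
        have "F (u @ [x]) = 0" for u using NN_lets[OF cc F] False unfolding lets_def by auto
        then show ?thesis by (simp add: sl_def fun_eq_iff)
      next
        case True
        then consider "x \<in> S2" | "x \<in> S1" using S by blast
        then show ?thesis
        proof cases
          case 1
          have "\<forall>u v. set u \<subseteq> S1 \<longrightarrow> set v \<subseteq> S2 \<longrightarrow> sl x F (u @ v) = 0"
          proof (intro allI impI)
            fix u v assume "set u \<subseteq> S1" "set v \<subseteq> S2"
            then show "sl x F (u @ v) = 0" using z[rule_format, of u "v @ [x]"] 1 by (simp add: sl_def)
          qed
          then show ?thesis using Suc.IH slN by blast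
        next
          case 2
          have "\<forall>u v. set u \<subseteq> S1 \<longrightarrow> set v \<subseteq> S2 \<longrightarrow> sl x F (u @ v) = 0"
          proof (intro allI impI)
            fix u v assume u: "set u \<subseteq> S1" and v: "set v \<subseteq> S2"
            have "F ((u @ [x]) @ v) = 0" using z[rule_format, of "u @ [x]" v] u v 2 by simp
            then have "F (u @ [x] @ v) = 0" by simp
            then have "F (u @ v @ [x]) = 0" using move_left[OF cc yd fin mix F 2 v] by blast
            then show "sl x F (u @ v) = 0" by (simp add: sl_def)
          qed
          then show ?thesis using Suc.IH slN by blast
        qed
      qed
    qed
  qed
qed

lemma LR:
  fixes act :: "'g::group_add \<Rightarrow> 'g \<Rightarrow> 'k::field"
  assumes cc1: "cc S1" and cc2: "cc S2" and disj: "S1 \<inter> S2 = {}"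
    and sa: "slen a p" and la: "lets S1 a" and u: "length u = p"
  shows "\<forall>b v. slen b q \<longrightarrow> lets S2 b \<longrightarrow> set v \<subseteq> S2 \<longrightarrow> length v = q \<longrightarrow>
     omega act (p + q) (tconcat p q a b) (u @ v) = omega act p a u * omega act q b v"
proof (induction q)
  case 0
  show ?case
  proof (intro allI impI)
    fix b :: "('g,'k) tvec" and v :: "'g list"
    assume "slen b 0" "lets S2 b" "set v \<subseteq> S2" "length v = 0"
    moreover have "omega act (p + 0) (tconcat p 0 a b) = (\<lambda>w. b [] * omega act p a w)"
      using tconcat_0r[OF sa] by (simp add: omega_smult)
    ultimately show "omega act (p + 0) (tconcat p 0 a b) (u @ v) = omega act p a u * omega act 0 b v"
      by (simp add: mult.commute)
  qed
next
  case (Suc q)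
  show ?case
  proof (intro allI impI)
    fix b :: "('g,'k) tvec" and v :: "'g list"
    assume sb: "slen b (Suc q)" and lb: "lets S2 b" and v: "set v \<subseteq> S2" and lv: "length v = Suc q"
    obtain v' x where vx: "v = v' @ [x]" using lv by (metis length_Suc_conv_rev)
    have x: "x \<in> S2" and v': "set v' \<subseteq> S2" and lv': "length v' = q" using v lv vx by auto
    show "omega act (p + Suc q) (tconcat p (Suc q) a b) (u @ v) = omega act p a u * omega act (Suc q) b v"
    proof (cases p)
      case 0
      then have "u = []" using u by simp
      then show ?thesis using tconcat_0l[OF sb] 0 by (simp add: omega_smult)
    next
      case (Suc p')
      have sa': "slen a (Suc p')" using sa Suc by simp
      let ?b1 = "sl x (Tn act q b)"
      have z: "sl x (Tn act p' a) = (\<lambda>_. 0)"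
      proof (rule ext)
        fix w
        have "lets S1 (Tn act p' a)" by (rule lets_Tn[OF cc1 la])
        moreover have "x \<notin> S1" using x disj by blast
        ultimately show "sl x (Tn act p' a) w = 0" unfolding lets_def sl_def by auto
      qed
      have z2: "tconcat p' (Suc q) (\<lambda>_. 0) (gact act x b) = (\<lambda>_. (0::'k))"
        by (simp add: tconcat_def fun_eq_iff)
      have e: "sl x (omega act (Suc p' + Suc q) (tconcat (Suc p') (Suc q) a b)) =
          (\<lambda>w. omega act (Suc p' + q) (tconcat (Suc p') q a ?b1) w)"
        using omega_tconcat_sl[OF sa' sb, of x act] z z2 by (simp add: omega_zero)
      have sb1: "slen ?b1 q" by (rule slen_sl[OF slen_Tn[OF sb]])
      have lb1: "lets S2 ?b1" by (rule lets_sl[OF lets_Tn[OF cc2 lb]])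
      have IH: "omega act (Suc p' + q) (tconcat (Suc p') q a ?b1) (u @ v') = omega act (Suc p') a u * omega act q ?b1 v'"
        using Suc.IH sb1 lb1 v' lv' Suc by auto
      have o: "omega act q ?b1 = sl x (omega act (Suc q) b)" using sl_omega_Suc[OF sb] by simp
      have "omega act (p + Suc q) (tconcat p (Suc q) a b) (u @ v) = sl x (omega act (Suc p' + Suc q) (tconcat (Suc p') (Suc q) a b)) (u @ v')"
        using Suc vx by (simp add: sl_def)
      also have "\<dots> = omega act (Suc p') a u * omega act q ?b1 v'" using e IH by simp
      also have "\<dots> = omega act p a u * omega act (Suc q) b v" using o Suc vx by (simp add: sl_def)
      finally show ?thesis .
    qed
  qed
qed


lemma YD_cc: "YD_data act S \<Longrightarrow> cc S"
  unfolding YD_data_def cc_def by blast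

lemma YD_yd: "YD_data act S \<Longrightarrow> yd act S"
  unfolding YD_data_def yd_def by blast

lemma YD_fin: "YD_data act S \<Longrightarrow> finite S"
  unfolding YD_data_def by blast

lemma cc_Un: "cc S1 \<Longrightarrow> cc S2 \<Longrightarrow> cc (S1 \<union> S2)"
  unfolding cc_def by blast

lemma yd_Un: "yd act S1 \<Longrightarrow> yd act S2 \<Longrightarrow> yd act (S1 \<union> S2)"
  unfolding yd_def by blast

lemma subcomod_WA:
  fixes W :: "('g \<Rightarrow> 'k::field) set"
  assumes sc: "subcomodule S W" and fin: "finite S"
  shows "W = WA {x. dl x \<in> W}" "{x. dl x \<in> W} \<subseteq> S"
proof -
  have vW: "vsubspace W" and sW: "\<forall>w\<in>W. \<forall>g. w g \<noteq> 0 \<longrightarrow> g \<in> S"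
    and pW: "\<forall>w\<in>W. \<forall>g. (\<lambda>x. if x = g then w g else 0) \<in> W"
    using sc unfolding subcomodule_def by blast+
  show AS: "{x. dl x \<in> W} \<subseteq> S"
  proof
    fix x assume "x \<in> {x. dl x \<in> W}"
    then have "dl x \<in> W" by simp
    moreover have "(dl x :: 'g \<Rightarrow> 'k) x \<noteq> 0" by (simp add: dl_def)
    ultimately show "x \<in> S" using sW by blast
  qed
  show "W = WA {x. dl x \<in> W}"
  proof
    show "W \<subseteq> WA {x. dl x \<in> W}"
    proof
      fix w assume w: "w \<in> W"
      show "w \<in> WA {x. dl x \<in> W}" unfolding WA_def
      proof (intro CollectI allI impI)
        fix g assume g: "w g \<noteq> 0"
        have "(\<lambda>x. if x = g then w g else 0) \<in> W" using pW w by blast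
        then have "(\<lambda>u. inverse (w g) * (if u = g then w g else 0)) \<in> W" by (rule vsub_smult[OF vW])
        moreover have "(\<lambda>u. inverse (w g) * (if u = g then w g else 0)) = dl g"
          using g by (auto simp: dl_def fun_eq_iff)
        ultimately show "dl g \<in> W" by simp
      qed
    qed
  next
    show "WA {x. dl x \<in> W} \<subseteq> W"
    proof
      fix w :: "'g \<Rightarrow> 'k" assume w: "w \<in> WA {x. dl x \<in> W}"
      let ?A = "{x. dl x \<in> W}"
      have finA: "finite ?A" using AS fin finite_subset by blast
      have "w = (\<lambda>u. \<Sum>g\<in>?A. w g * dl g u)"
      proof (rule ext)
        fix u
        have "(\<Sum>g\<in>?A. w g * dl g u) = (\<Sum>g\<in>?A. if g = u then w u else 0)"
          by (rule sum.cong) (auto simp: dl_def)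
        also have "\<dots> = (if u \<in> ?A then w u else 0)" using finA by (simp add: sum.delta')
        also have "\<dots> = w u" using w unfolding WA_def by auto
        finally show "w u = (\<Sum>g\<in>?A. w g * dl g u)" by simp
      qed
      moreover have "(\<lambda>u. \<Sum>g\<in>?A. w g * dl g u) \<in> W"
      proof (rule vsub_sum[OF vW finA])
        fix g assume "g \<in> ?A"
        then have "dl g \<in> W" by simp
        then show "(\<lambda>u. w g * dl g u) \<in> W" by (rule vsub_smult[OF vW])
      qed
      ultimately show "w \<in> W" by simp
    qed
  qed
qed

lemma WA_Un: "{(\<lambda>g. w1 g + w2 g) | w1 w2. w1 \<in> WA A1 \<and> w2 \<in> WA A2} = (WA (A1 \<union> A2) :: ('g \<Rightarrow> 'k::field) set)"
proof
  show "{(\<lambda>g. w1 g + w2 g) | w1 w2. w1 \<in> WA A1 \<and> w2 \<in> WA A2} \<subseteq> (WA (A1 \<union> A2) :: ('g \<Rightarrow> 'k::field) set)"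
  proof
    fix w :: "'g \<Rightarrow> 'k" assume "w \<in> {(\<lambda>g. w1 g + w2 g) | w1 w2. w1 \<in> WA A1 \<and> w2 \<in> WA A2}"
    then obtain w1 w2 where "w = (\<lambda>g. w1 g + w2 g)" "w1 \<in> WA A1" "w2 \<in> WA A2" by blast
    then show "w \<in> WA (A1 \<union> A2)" unfolding WA_def
    proof (intro CollectI allI impI)
      fix g assume "w = (\<lambda>g. w1 g + w2 g)" "w1 \<in> {w. \<forall>g. w g \<noteq> 0 \<longrightarrow> g \<in> A1}" "w2 \<in> {w. \<forall>g. w g \<noteq> 0 \<longrightarrow> g \<in> A2}" "w g \<noteq> 0"
      then show "g \<in> A1 \<union> A2" by (cases "w1 g = 0") auto
    qed
  qed
next
  show "(WA (A1 \<union> A2) :: ('g \<Rightarrow> 'k::field) set) \<subseteq> {(\<lambda>g. w1 g + w2 g) | w1 w2. w1 \<in> WA A1 \<and> w2 \<in> WA A2}"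
  proof
    fix w :: "'g \<Rightarrow> 'k" assume w: "w \<in> WA (A1 \<union> A2)"
    let ?w1 = "\<lambda>g. if g \<in> A1 then w g else 0"
    let ?w2 = "\<lambda>g. if g \<in> A1 then 0 else w g"
    have "?w1 \<in> WA A1" unfolding WA_def by auto
    moreover have "?w2 \<in> WA A2" using w unfolding WA_def by auto
    moreover have "w = (\<lambda>g. ?w1 g + ?w2 g)" by auto
    ultimately show "w \<in> {(\<lambda>g. w1 g + w2 g) | w1 w2. w1 \<in> WA A1 \<and> w2 \<in> WA A2}"
      by (intro CollectI exI[of _ ?w1] exI[of _ ?w2]) simp
  qed
qed

lemma dir1:
  fixes act :: "'g::group_add \<Rightarrow> 'g \<Rightarrow> 'k::field"
  assumes ccS: "cc S" and ccT: "cc T" and TS: "T \<subseteq> S"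
    and H: "\<forall>n. MM act S A n \<subseteq> NN act A n"
  shows "MM act T (A \<inter> T) n \<subseteq> NN act (A \<inter> T) n"
proof
  fix f assume f: "f \<in> MM act T (A \<inter> T) n"
  have fN: "f \<in> NN act T n" and fA: "\<forall>u x. x \<notin> A \<inter> T \<longrightarrow> f (u @ [x]) = 0" using f unfolding MM_def by blast+
  have lf: "lets T f" by (rule NN_lets[OF ccT fN])
  have "f \<in> MM act S A n" unfolding MM_def
  proof (intro CollectI conjI allI impI)
    show "f \<in> NN act S n" using NN_mono[OF TS] fN by blast
    fix u x assume "x \<notin> A"
    then show "f (u @ [x]) = 0" using fA by blast
  qed
  then have "f \<in> NN act A n" using H by blast
  then have "proj T f \<in> NN act (A \<inter> T) n" by (rule proj_NN[OF ccT])
  moreover have "proj T f = f" using lf unfolding proj_def lets_def by (auto simp: fun_eq_iff)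
  ultimately show "f \<in> NN act (A \<inter> T) n" by simp
qed

lemma cnt_all: "set u \<subseteq> T \<Longrightarrow> cnt T u = length u"
  unfolding cnt_def by (subst filter_True) auto

lemma cnt_none: "set v \<inter> T = {} \<Longrightarrow> cnt T v = 0"
  unfolding cnt_def by (subst filter_False) auto

lemma cnt_append: "cnt T (u @ v) = cnt T u + cnt T v"
  unfolding cnt_def by simp

lemma scnt_tconcat:
  fixes a b :: "('g,'k::field) tvec"
  assumes "lets T a" "lets T' b" "T \<inter> T' = {}"
  shows "scnt T (tconcat p q a b) p"
  unfolding scnt_def
proof (intro allI impI)
  fix w assume nz: "tconcat p q a b w \<noteq> 0"
  have l: "length w = p + q" using nz unfolding tconcat_def by (cases "length w = p + q") simp_all
  have nab: "a (take p w) * b (drop p w) \<noteq> 0" using nz l unfolding tconcat_def by simp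
  have na: "a (take p w) \<noteq> 0" using nab by auto
  have nb: "b (drop p w) \<noteq> 0" using nab by auto
  have s1: "set (take p w) \<subseteq> T" using na assms(1) unfolding lets_def by blast
  have "cnt T (take p w) = length (take p w)" by (rule cnt_all[OF s1])
  then have 1: "cnt T (take p w) = p" using l by simp
  have "set (drop p w) \<subseteq> T'" using nb assms(2) unfolding lets_def by blast
  then have "set (drop p w) \<inter> T = {}" using assms(3) by blast
  then have 2: "cnt T (drop p w) = 0" by (rule cnt_none)
  show "cnt T w = p" using 1 2 cnt_append[of T "take p w" "drop p w"] by simp
qed


lemma sum_list_map_zero: "(\<forall>x\<in>set xs. f x = 0) \<Longrightarrow> sum_list (map f xs) = (0::'k::field)"
  by (induction xs) auto

lemma dir2:
  fixes act :: "'g::group_add \<Rightarrow> 'g \<Rightarrow> 'k::field"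
  assumes cc1: "cc S1" and cc2: "cc S2" and yd1: "yd act S1" and yd2: "yd act S2"
    and fin1: "finite S1" and fin2: "finite S2" and disj: "S1 \<inter> S2 = {}" and mix: "mixok act S1 S2"
    and A1S: "A1 \<subseteq> S1" and A2S: "A2 \<subseteq> S2"
    and H1: "\<forall>n. MM act S1 A1 n \<subseteq> NN act A1 n" and H2: "\<forall>n. MM act S2 A2 n \<subseteq> NN act A2 n"
  shows "MM act (S1 \<union> S2) (A1 \<union> A2) n \<subseteq> NN act (A1 \<union> A2) n"
proof
  let ?S = "S1 \<union> S2" and ?A = "A1 \<union> A2"
  have cc: "cc ?S" by (rule cc_Un[OF cc1 cc2])
  have yd: "yd act ?S" by (rule yd_Un[OF yd1 yd2])
  have fin: "finite ?S" using fin1 fin2 by simp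
  fix f assume f: "f \<in> MM act ?S ?A n"
  have fN: "f \<in> NN act ?S n" and fA: "\<forall>u x. x \<notin> ?A \<longrightarrow> f (u @ [x]) = 0" using f unfolding MM_def by blast+
  have sf: "slen f n" by (rule NN_slen[OF fN])
  define H where "H p = (\<lambda>(u, v). if set u \<subseteq> S1 \<and> length u = p \<and> set v \<subseteq> S2 \<and> length v = n - p then f (u @ v) else 0)" for p
  have Ht: "H p \<in> tspan (MM act S1 A1 p) (MM act S2 A2 (n - p))" if pn: "p \<le> n" for p
  proof (rule rank_tspan[OF vsub_MM vsub_MM finite_words[OF fin1]])
    show "\<forall>u v. H p (u, v) \<noteq> 0 \<longrightarrow> u \<in> words S1 p" by (auto simp: H_def words_def split: if_splits)
    show "\<forall>v. (\<lambda>u. H p (u, v)) \<in> MM act S1 A1 p"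
    proof
      fix v
      show "(\<lambda>u. H p (u, v)) \<in> MM act S1 A1 p"
      proof (cases "set v \<subseteq> S2 \<and> length v = n - p")
        case True
        have e: "(\<lambda>u. H p (u, v)) = proj S1 (\<lambda>u. f (u @ v))"
        proof (rule ext)
          fix u
          show "H p (u, v) = proj S1 (\<lambda>u. f (u @ v)) u"
          proof (cases "length u = p")
            case True
            then show ?thesis using \<open>set v \<subseteq> S2 \<and> length v = n - p\<close> by (simp add: H_def proj_def)
          next
            case False
            have "length (u @ v) \<noteq> n" using False True pn by auto
            then have "f (u @ v) = 0" using sf unfolding slen_def by blast
            then show ?thesis using False by (simp add: H_def proj_def)
          qed
        qed
        have "f \<in> NN act ?S (p + length v)" using fN True pn by simp
        then have "(\<lambda>u. f (u @ v)) \<in> NN act ?S p" by (rule sls_NN[OF cc])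
        then have "proj S1 (\<lambda>u. f (u @ v)) \<in> NN act (?S \<inter> S1) p" by (rule proj_NN[OF cc1])
        moreover have "?S \<inter> S1 = S1" by blast
        ultimately have N1: "proj S1 (\<lambda>u. f (u @ v)) \<in> NN act S1 p" by simp
        have M1: "\<forall>u x. x \<notin> A1 \<longrightarrow> proj S1 (\<lambda>u. f (u @ v)) (u @ [x]) = 0"
        proof (intro allI impI)
          fix u x assume x: "x \<notin> A1"
          show "proj S1 (\<lambda>u. f (u @ v)) (u @ [x]) = 0"
          proof (cases "set (u @ [x]) \<subseteq> S1")
            case True
            then have xS1: "x \<in> S1" by simp
            then have "x \<notin> A2" using A2S disj by blast
            then have "x \<notin> ?A" using x by simp
            then have "f ((u @ v) @ [x]) = 0" using fA by blast
            then have "f (u @ v @ [x]) = 0" by simp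
            moreover have "set v \<subseteq> S2" using \<open>set v \<subseteq> S2 \<and> length v = n - p\<close> by blast
            ultimately have "f (u @ [x] @ v) = 0"
              using move_left[OF cc yd fin mix fN xS1] by blast
            then show ?thesis using True by (simp add: proj_def)
          next
            case False
            then show ?thesis unfolding proj_def by auto
          qed
        qed
        show ?thesis unfolding e MM_def using N1 M1 by blast
      next
        case False
        then have "(\<lambda>u. H p (u, v)) = (\<lambda>_. 0)" by (auto simp: H_def fun_eq_iff)
        then show ?thesis using vsub_zero[OF vsub_MM] by metis
      qed
    qed
    show "\<forall>u. (\<lambda>v. H p (u, v)) \<in> MM act S2 A2 (n - p)"
    proof
      fix u
      show "(\<lambda>v. H p (u, v)) \<in> MM act S2 A2 (n - p)"
      proof (cases "set u \<subseteq> S1 \<and> length u = p")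
        case True
        have e: "(\<lambda>v. H p (u, v)) = proj S2 (\<lambda>v. f (u @ v))"
        proof (rule ext)
          fix v
          show "H p (u, v) = proj S2 (\<lambda>v. f (u @ v)) v"
          proof (cases "length v = n - p")
            case True
            then show ?thesis using \<open>set u \<subseteq> S1 \<and> length u = p\<close> by (simp add: H_def proj_def)
          next
            case False
            have "length (u @ v) \<noteq> n" using False True pn by auto
            then have "f (u @ v) = 0" using sf unfolding slen_def by blast
            then show ?thesis using False by (simp add: H_def proj_def)
          qed
        qed
        have "f \<in> NN act ?S (length u + (n - p))" using fN True pn by simp
        then have "(\<lambda>v. f (u @ v)) \<in> NN act ?S (n - p)" by (rule rws_NN[OF cc yd fin])
        then have "proj S2 (\<lambda>v. f (u @ v)) \<in> NN act (?S \<inter> S2) (n - p)" by (rule proj_NN[OF cc2])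
        moreover have "?S \<inter> S2 = S2" by blast
        ultimately have N2: "proj S2 (\<lambda>v. f (u @ v)) \<in> NN act S2 (n - p)" by simp
        have M2: "\<forall>v x. x \<notin> A2 \<longrightarrow> proj S2 (\<lambda>v. f (u @ v)) (v @ [x]) = 0"
        proof (intro allI impI)
          fix v x assume x: "x \<notin> A2"
          show "proj S2 (\<lambda>v. f (u @ v)) (v @ [x]) = 0"
          proof (cases "set (v @ [x]) \<subseteq> S2")
            case True
            then have "x \<in> S2" by simp
            then have "x \<notin> A1" using A1S disj by blast
            then have "x \<notin> ?A" using x by simp
            then have "f ((u @ v) @ [x]) = 0" using fA by blast
            then show ?thesis using True by (simp add: proj_def)
          next
            case False
            then show ?thesis unfolding proj_def by auto
          qed
        qed
        show ?thesis unfolding e MM_def using N2 M2 by blast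
      next
        case False
        then have "(\<lambda>v. H p (u, v)) = (\<lambda>_. 0)" by (auto simp: H_def fun_eq_iff)
        then show ?thesis using vsub_zero[OF vsub_MM] by metis
      qed
    qed
  qed
  have "\<forall>p. \<exists>ps. p \<le> n \<longrightarrow> set ps \<subseteq> MM act S1 A1 p \<times> MM act S2 A2 (n - p) \<and>
      H p = (\<lambda>(u, v). sum_list (map (\<lambda>(a, c). a u * c v) ps))"
    using Ht unfolding tspan_def by blast
  then obtain ps where ps: "\<And>p. p \<le> n \<Longrightarrow> set (ps p) \<subseteq> MM act S1 A1 p \<times> MM act S2 A2 (n - p) \<and>
      H p = (\<lambda>(u, v). sum_list (map (\<lambda>(a, c). a u * c v) (ps p)))"
    by metis
  define aa where "aa p c = (SOME a. slen a p \<and> lets A1 a \<and> c = omega act p a)" for p c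
  define bb where "bb p d = (SOME b. slen b (n - p) \<and> lets A2 b \<and> d = omega act (n - p) b)" for p d
  have aa: "slen (aa p c) p \<and> lets A1 (aa p c) \<and> c = omega act p (aa p c)" if "c \<in> MM act S1 A1 p" for p c
  proof -
    have "c \<in> NN act A1 p" using H1 that by blast
    then have "\<exists>a. slen a p \<and> lets A1 a \<and> c = omega act p a" by (rule NN_E) blast
    then show ?thesis unfolding aa_def by (rule someI_ex)
  qed
  have bb: "slen (bb p d) (n - p) \<and> lets A2 (bb p d) \<and> d = omega act (n - p) (bb p d)" if "d \<in> MM act S2 A2 (n - p)" for p d
  proof -
    have "d \<in> NN act A2 (n - p)" using H2 that by blast
    then have "\<exists>b. slen b (n - p) \<and> lets A2 b \<and> d = omega act (n - p) b" by (rule NN_E) blast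
    then show ?thesis unfolding bb_def by (rule someI_ex)
  qed
  define tm where "tm p cd = omega act n (tconcat p (n - p) (aa p (fst cd)) (bb p (snd cd)))" for p cd
  define g where "g = (\<lambda>w. \<Sum>p\<le>n. sum_list (map (\<lambda>cd. tm p cd w) (ps p)))"
  have cdmem: "fst cd \<in> MM act S1 A1 p \<and> snd cd \<in> MM act S2 A2 (n - p)" if "p \<le> n" "cd \<in> set (ps p)" for p cd
    using ps[OF that(1)] that(2) by auto
  have tmN: "tm p cd \<in> NN act ?A n" if "p \<le> n" "cd \<in> set (ps p)" for p cd
  proof -
    have a: "slen (aa p (fst cd)) p" "lets A1 (aa p (fst cd))" using aa cdmem[OF that] by blast+
    have b: "slen (bb p (snd cd)) (n - p)" "lets A2 (bb p (snd cd))" using bb cdmem[OF that] by blast+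
    have "lets ?A (tconcat p (n - p) (aa p (fst cd)) (bb p (snd cd)))"
      using lets_tconcat[OF lets_mono[OF a(2)] lets_mono[OF b(2)]] by blast
    moreover have "slen (tconcat p (n - p) (aa p (fst cd)) (bb p (snd cd))) n"
      using slen_tconcat[of p "n - p"] that(1) by simp
    ultimately show ?thesis unfolding tm_def using NN_I by blast
  qed
  have gN: "g \<in> NN act ?A n" unfolding g_def
  proof (rule vsub_sum[OF vsub_NN finite_atMost])
    fix p assume "p \<in> {..n}"
    then have pn: "p \<le> n" by simp
    show "(\<lambda>w. sum_list (map (\<lambda>cd. tm p cd w) (ps p))) \<in> NN act ?A n"
      by (rule vsub_sum_list[OF vsub_NN]) (rule tmN[OF pn])
  qed
  have gS: "g \<in> NN act ?S n" using NN_mono[of ?A ?S] gN A1S A2S by blast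
  have D: "(\<lambda>w. f w - g w) = (\<lambda>_. 0)"
  proof -
    have DN: "(\<lambda>w. f w - g w) \<in> NN act ?S n" by (rule vsub_diff[OF vsub_NN fN gS])
    have "\<forall>u v. set u \<subseteq> S1 \<longrightarrow> set v \<subseteq> S2 \<longrightarrow> f (u @ v) - g (u @ v) = 0"
    proof (intro allI impI)
      fix u v assume u: "set u \<subseteq> S1" and v: "set v \<subseteq> S2"
      show "f (u @ v) - g (u @ v) = 0"
      proof (cases "length u + length v = n")
        case False
        have "f (u @ v) = 0" using sf False unfolding slen_def by auto
        moreover have "g (u @ v) = 0" using NN_slen[OF gN] False unfolding slen_def by auto
        ultimately show ?thesis by simp
      next
        case True
        define p where "p = length u"
        have pn: "p \<le> n" and lv: "length v = n - p" using True by (auto simp: p_def)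
        have fH: "f (u @ v) = sum_list (map (\<lambda>(a, c). a u * c v) (ps p))"
        proof -
          have "f (u @ v) = H p (u, v)" using u v lv by (simp add: H_def p_def)
          then show ?thesis using ps[OF pn] by simp
        qed
        have cntuv: "cnt S1 (u @ v) = p"
        proof -
          have "cnt S1 u = length u" by (rule cnt_all[OF u])
          moreover have "cnt S1 v = 0" using v disj by (intro cnt_none) blast
          ultimately show ?thesis by (simp add: cnt_append p_def)
        qed
        have z: "tm p' cd (u @ v) = 0" if "p' \<le> n" "cd \<in> set (ps p')" "p' \<noteq> p" for p' cd
        proof -
          have a: "lets A1 (aa p' (fst cd))" using aa cdmem[OF that(1,2)] by blast
          have b: "lets A2 (bb p' (snd cd))" using bb cdmem[OF that(1,2)] by blast
          have "scnt S1 (tconcat p' (n - p') (aa p' (fst cd)) (bb p' (snd cd))) p'"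
            by (rule scnt_tconcat[OF lets_mono[OF a A1S] lets_mono[OF b A2S] disj])
          then have "scnt S1 (tm p' cd) p'" unfolding tm_def by (rule scnt_omega[OF cc1])
          then show ?thesis using cntuv that(3) unfolding scnt_def by auto
        qed
        have t: "tm p cd (u @ v) = fst cd u * snd cd v" if "cd \<in> set (ps p)" for cd
        proof -
          have a: "slen (aa p (fst cd)) p" "lets A1 (aa p (fst cd))" "fst cd = omega act p (aa p (fst cd))"
            using aa cdmem[OF pn that] by blast+
          have b: "slen (bb p (snd cd)) (n - p)" "lets A2 (bb p (snd cd))" "snd cd = omega act (n - p) (bb p (snd cd))"
            using bb cdmem[OF pn that] by blast+
          have "omega act (p + (n - p)) (tconcat p (n - p) (aa p (fst cd)) (bb p (snd cd))) (u @ v)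
              = omega act p (aa p (fst cd)) u * omega act (n - p) (bb p (snd cd)) v"
            using LR[OF cc1 cc2 disj a(1) lets_mono[OF a(2) A1S], of u "n - p"] p_def b(1) lets_mono[OF b(2) A2S] v lv
            by blast
          then show ?thesis unfolding tm_def using pn a(3) b(3) by simp
        qed
        have "g (u @ v) = (\<Sum>p'\<le>n. if p' = p then sum_list (map (\<lambda>cd. tm p cd (u @ v)) (ps p)) else 0)"
          unfolding g_def
        proof (rule sum.cong[OF refl])
          fix p' assume "p' \<in> {..n}"
          then have p'n: "p' \<le> n" by simp
          show "sum_list (map (\<lambda>cd. tm p' cd (u @ v)) (ps p')) = (if p' = p then sum_list (map (\<lambda>cd. tm p cd (u @ v)) (ps p)) else 0)"
          proof (cases "p' = p")
            case True
            then show ?thesis by simp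
          next
            case False
            have "(\<Sum>cd\<leftarrow>ps p'. tm p' cd (u @ v)) = 0"
              by (rule sum_list_map_zero) (use z[OF p'n _ False] in auto)
            then show ?thesis using False by simp
          qed
        qed
        also have "\<dots> = sum_list (map (\<lambda>cd. tm p cd (u @ v)) (ps p))" using pn by (simp add: sum.delta')
        also have "\<dots> = sum_list (map (\<lambda>cd. fst cd u * snd cd v) (ps p))"
          using t by (intro arg_cong[where f = sum_list] map_cong) auto
        also have "\<dots> = f (u @ v)" using fH by (simp add: case_prod_unfold)
        finally show ?thesis by simp
      qed
    qed
    then show ?thesis using sorted_zero[OF cc yd fin mix refl] DN by blast
  qed
  have "f = g"
  proof (rule ext)
    fix w show "f w = g w" using fun_cong[OF D, of w] by simp
  qed
  then show "f \<in> NN act ?A n" using gN by simp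
qed

theorem mainTheorem9:
  fixes act :: "'g::group_add \<Rightarrow> 'g \<Rightarrow> 'k::field_char_0"
    and S1 S2 :: "'g set" and W1 W2 :: "('g \<Rightarrow> 'k) set"
  assumes alg_closed: "\<forall>p :: 'k poly. degree p \<noteq> 0 \<longrightarrow> (\<exists>x. poly p x = 0)"
    and YD1: "YD_data act S1" and YD2: "YD_data act S2"
    and disj: "S1 \<inter> S2 = {}"
    and csq: "\<forall>s\<in>S2. \<forall>t\<in>S1. braid act 0 (braid act 0 (ebasis [s, t])) = ebasis [s, t]"
    and W1: "subcomodule S1 W1" and W2: "subcomodule S2 W2"
  shows "unique_lcs act (S1 \<union> S2) {(\<lambda>g. w1 g + w2 g) | w1 w2. w1 \<in> W1 \<and> w2 \<in> W2}
     \<longleftrightarrow> (unique_lcs act S1 W1 \<and> unique_lcs act S2 W2)"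
proof -
  have cc1: "cc S1" and yd1: "yd act S1" and fin1: "finite S1" using YD1 YD_cc YD_yd YD_fin by blast+
  have cc2: "cc S2" and yd2: "yd act S2" and fin2: "finite S2" using YD2 YD_cc YD_yd YD_fin by blast+
  have cc: "cc (S1 \<union> S2)" by (rule cc_Un[OF cc1 cc2])
  have yd: "yd act (S1 \<union> S2)" by (rule yd_Un[OF yd1 yd2])
  have fin: "finite (S1 \<union> S2)" using fin1 fin2 by simp
  have mix: "mixok act S1 S2" by (rule csq_mixok[OF csq])
  define A1 where "A1 = {x. dl x \<in> W1}"
  define A2 where "A2 = {x. dl x \<in> W2}"
  have W1A: "W1 = WA A1" and A1S: "A1 \<subseteq> S1" using subcomod_WA[OF W1 fin1] unfolding A1_def by blast+
  have W2A: "W2 = WA A2" and A2S: "A2 \<subseteq> S2" using subcomod_WA[OF W2 fin2] unfolding A2_def by blast+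
  have WU: "{(\<lambda>g. w1 g + w2 g) | w1 w2. w1 \<in> W1 \<and> w2 \<in> W2} = WA (A1 \<union> A2)"
    unfolding W1A W2A by (rule WA_Un)
  have AS: "A1 \<union> A2 \<subseteq> S1 \<union> S2" using A1S A2S by blast
  have i1: "A1 \<union> A2 \<inter> S1 = A1" using A1S A2S disj by blast
  have I1: "(A1 \<union> A2) \<inter> S1 = A1" using A1S A2S disj by blast
  have I2: "(A1 \<union> A2) \<inter> S2 = A2" using A1S A2S disj by blast
  have U: "unique_lcs act (S1 \<union> S2) (WA (A1 \<union> A2)) \<longleftrightarrow> (\<forall>n. MM act (S1 \<union> S2) (A1 \<union> A2) n \<subseteq> NN act (A1 \<union> A2) n)"
    by (rule unique_iff[OF cc yd fin AS])
  have U1: "unique_lcs act S1 (WA A1) \<longleftrightarrow> (\<forall>n. MM act S1 A1 n \<subseteq> NN act A1 n)"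
    by (rule unique_iff[OF cc1 yd1 fin1 A1S])
  have U2: "unique_lcs act S2 (WA A2) \<longleftrightarrow> (\<forall>n. MM act S2 A2 n \<subseteq> NN act A2 n)"
    by (rule unique_iff[OF cc2 yd2 fin2 A2S])
  have L: "(\<forall>n. MM act (S1 \<union> S2) (A1 \<union> A2) n \<subseteq> NN act (A1 \<union> A2) n) \<longleftrightarrow>
      (\<forall>n. MM act S1 A1 n \<subseteq> NN act A1 n) \<and> (\<forall>n. MM act S2 A2 n \<subseteq> NN act A2 n)"
  proof
    assume H: "\<forall>n. MM act (S1 \<union> S2) (A1 \<union> A2) n \<subseteq> NN act (A1 \<union> A2) n"
    have "\<And>n. MM act S1 ((A1 \<union> A2) \<inter> S1) n \<subseteq> NN act ((A1 \<union> A2) \<inter> S1) n"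
      by (rule dir1[OF cc cc1 _ H]) blast
    moreover have "\<And>n. MM act S2 ((A1 \<union> A2) \<inter> S2) n \<subseteq> NN act ((A1 \<union> A2) \<inter> S2) n"
      by (rule dir1[OF cc cc2 _ H]) blast
    ultimately show "(\<forall>n. MM act S1 A1 n \<subseteq> NN act A1 n) \<and> (\<forall>n. MM act S2 A2 n \<subseteq> NN act A2 n)"
      unfolding I1 I2 by blast
  next
    assume "(\<forall>n. MM act S1 A1 n \<subseteq> NN act A1 n) \<and> (\<forall>n. MM act S2 A2 n \<subseteq> NN act A2 n)"
    then show "\<forall>n. MM act (S1 \<union> S2) (A1 \<union> A2) n \<subseteq> NN act (A1 \<union> A2) n"
      using dir2[OF cc1 cc2 yd1 yd2 fin1 fin2 disj mix A1S A2S] by blast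
  qed
  show ?thesis using L U U1 U2 WU W1A W2A by simp
qed


end
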